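(* For $\alpha\in H_R'$ let $\theta_\alpha:=\phi_{B_++\delta\alpha}\colon H_R\to H_R$. Then: (1) For every forest $w$, $\theta_\alpha(w)-w\in\bigoplus_{n=0}^{|w|-1}H_{R,n}$. (2) Each $\theta_\alpha$ is a Hopf algebra automorphism of $H_R$, with inverse $\theta_\alpha^{-1}=\theta_{-\alpha\circ\theta_\alpha}$, and for all $\alpha,\beta\in H_R'$, $\theta_\alpha\circ\theta_\beta=\theta_\gamma$ with $\gamma=\alpha+\beta\circ\theta_\alpha^{-1}$. (3) The maps $\delta\colon H_R'\to\operatorname{End}(H_R)$ and $\alpha\mapsto\theta_\alpha$ are injective. Hence $\alpha\bullet\beta:=\alpha+\beta\circ\theta_\alpha^{-1}$ defines a group structure on $H_R'$ with neutral element $0$ and inverse $\alpha^{\bullet-1}=-\alpha\circ\theta_\alpha$, such that $\alpha\mapsto\theta_\alpha$ is a group isomorphism onto its image in $\operatorname{Aut}_{\mathrm{Hopf}}(H_R)$.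
   Context: $H_R$ is the Connes–Kreimer Hopf algebra of rooted trees over a field $\mathbb K$ of characteristic zero: free commutative algebra on rooted trees, basis rooted forests, $H_{R,n}$ the span of forests with $n$ nodes, $|w|$ the number of nodes; $B_+$ grafts all trees of a forest onto a new root; coproduct with $\Delta\circ B_+=B_+\otimes\mathbb 1+(\mathrm{id}\otimes B_+)\circ\Delta$. $H_R'=\operatorname{Hom}(H_R,\mathbb K)$; for $\alpha\in H_R'$, $\delta\alpha:=(\mathrm{id}\otimes\alpha)\circ\Delta-\mathbb 1\cdot\alpha$. For $M\in\operatorname{End}(H_R)$, $\phi_M$ is the unique unital algebra morphism $H_R\to H_R$ with $\phi_M\circ B_+=M\circ\phi_M$. *)

theory Defs
  imports "HOL-Library.Multiset" "HOL-Library.Poly_Mapping" "HOL-Library.Product_Plus"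
          "HOL-Algebra.Group"
begin

text \<open>Rooted (non-planar) trees: a root together with the multiset of its subtrees.\<close>
datatype rtree = Node "rtree multiset"

type_synonym forest = "rtree multiset"

primrec tsize :: "rtree \<Rightarrow> nat" where
  "tsize (Node ts) = 1 + sum_mset (image_mset tsize ts)"

definition fsize :: "forest \<Rightarrow> nat" where
  "fsize w = sum_mset (image_mset tsize w)"

text \<open>H_R over the field 'k: finitely supported 'k-combinations of forests; the
  product is the convolution induced by disjoint union of forests (multiset sum),
  so this is the free commutative algebra on rooted trees with unit the empty forest.\<close>
type_synonym 'k H = "forest \<Rightarrow>\<^sub>0 'k"

text \<open>H_R tensor H_R, with basis pairs of forests (product: componentwise union).\<close>
type_synonym 'k HH = "(forest \<times> forest) \<Rightarrow>\<^sub>0 'k"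

definition fr :: "forest \<Rightarrow> 'k::zero_neq_one H" where
  "fr w = Poly_Mapping.single w 1"

definition linext :: "('a \<Rightarrow> ('b \<Rightarrow>\<^sub>0 'k::comm_ring_1)) \<Rightarrow> ('a \<Rightarrow>\<^sub>0 'k) \<Rightarrow> ('b \<Rightarrow>\<^sub>0 'k)" where
  "linext g h = (\<Sum>w\<in>Poly_Mapping.keys h. Poly_Mapping.map (\<lambda>c. Poly_Mapping.lookup h w * c) (g w))"

definition is_linear :: "(('a \<Rightarrow>\<^sub>0 'k::comm_ring_1) \<Rightarrow> ('b \<Rightarrow>\<^sub>0 'k)) \<Rightarrow> bool" where
  "is_linear f \<longleftrightarrow> (\<forall>x y. f (x + y) = f x + f y) \<and>
                   (\<forall>c x. f (Poly_Mapping.map (\<lambda>d. c * d) x) = Poly_Mapping.map (\<lambda>d. c * d) (f x))"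

definition tensor :: "'k::comm_ring_1 H \<Rightarrow> 'k H \<Rightarrow> 'k HH" where
  "tensor x y = (\<Sum>a\<in>Poly_Mapping.keys x. \<Sum>b\<in>Poly_Mapping.keys y. Poly_Mapping.single (a, b) (Poly_Mapping.lookup x a * Poly_Mapping.lookup y b))"

definition Bplus :: "'k::comm_ring_1 H \<Rightarrow> 'k H" where
  "Bplus = linext (\<lambda>w. fr {#Node w#})"

definition id_tensor_Bplus :: "'k::comm_ring_1 HH \<Rightarrow> 'k HH" where
  "id_tensor_Bplus = linext (\<lambda>(a, b). Poly_Mapping.single (a, {#Node b#}) 1)"

text \<open>Coproduct on trees, by the recursion
  Delta(B_+ w) = B_+ w \<otimes> 1 + (id \<otimes> B_+)(Delta w), Delta multiplicative.\<close>
primrec cop_tree :: "rtree \<Rightarrow> 'k::comm_ring_1 HH" where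
  "cop_tree (Node ts) =
     Poly_Mapping.single ({#Node ts#}, {#}) 1 + id_tensor_Bplus (prod_mset (image_mset cop_tree ts))"

definition cop_forest :: "forest \<Rightarrow> 'k::comm_ring_1 HH" where
  "cop_forest w = prod_mset (image_mset cop_tree w)"

definition Delta :: "'k::comm_ring_1 H \<Rightarrow> 'k HH" where
  "Delta = linext cop_forest"

definition counit :: "'k::comm_ring_1 H \<Rightarrow> 'k" where
  "counit h = Poly_Mapping.lookup h {#}"

definition tensor_map :: "('k::comm_ring_1 H \<Rightarrow> 'k H) \<Rightarrow> ('k H \<Rightarrow> 'k H) \<Rightarrow> 'k HH \<Rightarrow> 'k HH" where
  "tensor_map f g = linext (\<lambda>(a, b). tensor (f (fr a)) (g (fr b)))"

text \<open>A linear functional on H_R is determined by (and freely given by) its values on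
  the basis of forests; so H_R' = (forest \<Rightarrow> 'k).\<close>
type_synonym 'k dual = "forest \<Rightarrow> 'k"

definition dapply :: "'k::comm_ring_1 dual \<Rightarrow> 'k H \<Rightarrow> 'k" where
  "dapply \<alpha> h = (\<Sum>w\<in>Poly_Mapping.keys h. Poly_Mapping.lookup h w * \<alpha> w)"

definition dcomp :: "'k::comm_ring_1 dual \<Rightarrow> ('k H \<Rightarrow> 'k H) \<Rightarrow> 'k dual" where
  "dcomp \<alpha> f = (\<lambda>w. dapply \<alpha> (f (fr w)))"

definition id_tensor_dual :: "'k::comm_ring_1 dual \<Rightarrow> 'k HH \<Rightarrow> 'k H" where
  "id_tensor_dual \<alpha> = linext (\<lambda>(a, b). Poly_Mapping.single a (\<alpha> b))"

definition delta :: "'k::comm_ring_1 dual \<Rightarrow> 'k H \<Rightarrow> 'k H" where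
  "delta \<alpha> h = id_tensor_dual \<alpha> (Delta h) - Poly_Mapping.single {#} (dapply \<alpha> h)"

text \<open>phi_M: the unital algebra morphism with phi_M \<circ> B_+ = M \<circ> phi_M, defined
  recursively on trees, multiplicatively on forests, linearly on H_R.\<close>
primrec phi_tree :: "('k::comm_ring_1 H \<Rightarrow> 'k H) \<Rightarrow> rtree \<Rightarrow> 'k H" where
  "phi_tree M (Node ts) = M (prod_mset (image_mset (phi_tree M) ts))"

definition phi :: "('k::comm_ring_1 H \<Rightarrow> 'k H) \<Rightarrow> 'k H \<Rightarrow> 'k H" where
  "phi M = linext (\<lambda>w. prod_mset (image_mset (phi_tree M) w))"

definition theta :: "'k::comm_ring_1 dual \<Rightarrow> 'k H \<Rightarrow> 'k H" where
  "theta \<alpha> = phi (\<lambda>h. Bplus h + delta \<alpha> h)"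

text \<open>A Hopf algebra endomorphism is a linear, unital, multiplicative map compatible with
  coproduct and counit (compatibility with the antipode is then automatic).\<close>
definition hopf_endo :: "('k::comm_ring_1 H \<Rightarrow> 'k H) \<Rightarrow> bool" where
  "hopf_endo f \<longleftrightarrow> is_linear f \<and> f 1 = 1 \<and> (\<forall>x y. f (x * y) = f x * f y) \<and>
      (\<forall>x. Delta (f x) = tensor_map f f (Delta x)) \<and> (\<forall>x. counit (f x) = counit x)"

definition hopf_aut :: "('k::comm_ring_1 H \<Rightarrow> 'k H) \<Rightarrow> bool" where
  "hopf_aut f \<longleftrightarrow> hopf_endo f \<and> bij f"

definition AutHopf :: "('k::comm_ring_1 H \<Rightarrow> 'k H) monoid" where
  "AutHopf = \<lparr>carrier = {f. hopf_aut f}, monoid.mult = (\<circ>), one = id\<rparr>"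

definition bullet :: "'k::comm_ring_1 dual \<Rightarrow> 'k dual \<Rightarrow> 'k dual" where
  "bullet \<alpha> \<beta> = (\<lambda>w. \<alpha> w + dcomp \<beta> (inv_into UNIV (theta \<alpha>)) w)"

definition dual_group :: "'k::comm_ring_1 dual monoid" where
  "dual_group = \<lparr>carrier = UNIV, monoid.mult = bullet, one = (\<lambda>_. 0)\<rparr>"

end

theory Submission
  imports Defs
begin


abbreviation lk where "lk \<equiv> Poly_Mapping.lookup"
abbreviation ks where "ks \<equiv> Poly_Mapping.keys"

abbreviation bas :: "'a \<Rightarrow> 'a \<Rightarrow>\<^sub>0 'k::zero_neq_one" where "bas a \<equiv> Poly_Mapping.single a 1"

lemma lookup_map_mult: "Poly_Mapping.lookup (Poly_Mapping.map ((*) c) x) k = (c::'k::semiring_0) * Poly_Mapping.lookup x k"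
  by transfer (simp add: when_def)

lemma map_mult_conv: "Poly_Mapping.map ((*) c) x = Poly_Mapping.single 0 (c::'k::semiring_1) * (x :: 'a::monoid_add \<Rightarrow>\<^sub>0 'k)"
  by (rule mult_map_scale_conv_mult)

lemma lookup_single0_mult: "Poly_Mapping.lookup (Poly_Mapping.single 0 c * x) k = (c::'k::semiring_1) * Poly_Mapping.lookup (x::'a::monoid_add \<Rightarrow>\<^sub>0 'k) k"
  by (metis lookup_map_mult map_mult_conv)

lemma linext_alt: "linext g h = (\<Sum>w\<in>Poly_Mapping.keys h. Poly_Mapping.single 0 (Poly_Mapping.lookup h w) * g w)"
  unfolding linext_def by (simp add: map_mult_conv[symmetric])

lemma map_mult_sum: "Poly_Mapping.map ((*) c) (sum f A) = (\<Sum>a\<in>A. Poly_Mapping.map ((*) (c::'k::semiring_0)) (f a))"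
  by (rule poly_mapping_eqI) (simp add: lookup_map_mult lookup_sum sum_distrib_left)

lemma map_mult_add: "Poly_Mapping.map ((*) c) (x + y) = Poly_Mapping.map ((*) (c::'k::semiring_0)) x + Poly_Mapping.map ((*) c) y"
  by (rule poly_mapping_eqI) (simp add: lookup_map_mult lookup_add distrib_left)

lemma map_mult_distrib: "Poly_Mapping.map ((*) (c+d)) x = Poly_Mapping.map ((*) (c::'k::semiring_0)) x + Poly_Mapping.map ((*) d) x"
  by (rule poly_mapping_eqI) (simp add: lookup_map_mult lookup_add distrib_right)

lemma map_mult_mult: "Poly_Mapping.map ((*) c) (Poly_Mapping.map ((*) d) x) = Poly_Mapping.map ((*) (c*(d::'k::semiring_0))) x"
  by (rule poly_mapping_eqI) (simp add: lookup_map_mult mult.assoc)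

lemma map_mult_0[simp]: "Poly_Mapping.map ((*) (0::'k::semiring_0)) x = 0"
  by (rule poly_mapping_eqI) (simp add: lookup_map_mult)

lemma map_mult_1[simp]: "Poly_Mapping.map ((*) (1::'k::semiring_1)) x = x"
  by (rule poly_mapping_eqI) (simp add: lookup_map_mult)

lemma map_mult_zero[simp]: "Poly_Mapping.map ((*) (c::'k::semiring_0)) 0 = 0"
  by (rule poly_mapping_eqI) (simp add: lookup_map_mult)

lemma map_mult_single: "Poly_Mapping.map ((*) c) (Poly_Mapping.single a d) = Poly_Mapping.single a (c * (d::'k::semiring_0))"
  by (rule poly_mapping_eqI) (simp add: lookup_map_mult lookup_single when_def)

lemma map_mult_minus: "Poly_Mapping.map ((*) c) (- x) = - Poly_Mapping.map ((*) (c::'k::ring)) x"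
  by (rule poly_mapping_eqI) (simp add: lookup_map_mult)

lemma map_mult_diff: "Poly_Mapping.map ((*) c) (x - y) = Poly_Mapping.map ((*) (c::'k::ring)) x - Poly_Mapping.map ((*) c) y"
  by (rule poly_mapping_eqI) (simp add: lookup_map_mult lookup_minus right_diff_distrib)

lemma linext_0[simp]: "linext g 0 = 0"
  by (simp add: linext_def)

lemma linext_single: "linext g (Poly_Mapping.single a c) = Poly_Mapping.map ((*) c) (g a)"
  by (cases "c = 0") (simp_all add: linext_def)

lemma linext_bas[simp]: "linext g (bas a) = g a"
  by (simp add: linext_single)

lemma linext_add: "linext g (x + y) = linext g x + linext g y"
proof -
  have *: "(\<Sum>i\<in>ks x. Poly_Mapping.map ((*) (lk x i)) (g i))
         = (\<Sum>i\<in>ks x \<union> ks y. Poly_Mapping.map ((*) (lk x i)) (g i))"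
          "(\<Sum>i\<in>ks y. Poly_Mapping.map ((*) (lk y i)) (g i))
         = (\<Sum>i\<in>ks x \<union> ks y. Poly_Mapping.map ((*) (lk y i)) (g i))"
    by (auto simp: in_keys_iff intro: sum.mono_neutral_cong_left)
  have "linext g (x+y) = (\<Sum>i\<in>ks (x + y).
       Poly_Mapping.map ((*) (lk x i)) (g i) + Poly_Mapping.map ((*) (lk y i)) (g i))"
    by (auto simp: linext_def lookup_add map_mult_distrib)
  also have "... = (\<Sum>i \<in> ks x \<union> ks y. Poly_Mapping.map ((*) (lk x i)) (g i)
                         + Poly_Mapping.map ((*) (lk y i)) (g i))"
  proof (rule sum.mono_neutral_cong_left)
    show "\<forall>i\<in>ks x \<union> ks y - ks (x + y).
       Poly_Mapping.map ((*) (lk x i)) (g i) + Poly_Mapping.map ((*) (lk y i)) (g i) = 0"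
      by (metis DiffD2 map_mult_distrib map_mult_0 in_keys_iff lookup_add)
  qed (auto simp: keys_add)
  also have "... = linext g x + linext g y"
    by (auto simp: * sum.distrib linext_def)
  finally show ?thesis .
qed

lemma linext_smul: "linext g (Poly_Mapping.map ((*) c) x) = Poly_Mapping.map ((*) c) (linext g x)"
proof -
  have "linext g (Poly_Mapping.map ((*) c) x) = (\<Sum>i\<in>ks x. Poly_Mapping.map ((*) (c * lk x i)) (g i))"
    unfolding linext_def
    by (rule sum.mono_neutral_cong_left) (auto simp: in_keys_iff lookup_map_mult)
  also have "\<dots> = Poly_Mapping.map ((*) c) (linext g x)"
    by (simp add: linext_def map_mult_sum map_mult_mult)
  finally show ?thesis .
qed

lemma is_linear_linext: "is_linear (linext g)"
  unfolding is_linear_def by (simp add: linext_add linext_smul)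

lemma linear_add: "is_linear f \<Longrightarrow> f (x + y) = f x + f y"
  by (simp add: is_linear_def)

lemma linear_smul: "is_linear f \<Longrightarrow> f (Poly_Mapping.map ((*) c) x) = Poly_Mapping.map ((*) c) (f x)"
  unfolding is_linear_def by (metis (no_types))

lemma linear_0: "is_linear f \<Longrightarrow> f 0 = 0"
  using linear_add[of f 0 0] by simp

lemma linear_minus: "is_linear f \<Longrightarrow> f (- x) = - f x"
proof -
  assume l: "is_linear f"
  have "f x + f (-x) = 0" using linear_add[OF l, of x "-x"] linear_0[OF l] by simp
  then show ?thesis by (simp add: add_eq_0_iff)
qed

lemma linear_diff: "is_linear f \<Longrightarrow> f (x - y) = f x - f y"
  using linear_add[of f x "-y"] linear_minus[of f y] by simp

lemma linear_sum: "is_linear f \<Longrightarrow> f (sum g A) = (\<Sum>a\<in>A. f (g a))"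
  by (induction A rule: infinite_finite_induct) (auto simp: linear_0 linear_add)

lemma linext_expansion: "linext bas x = x"
proof -
  have *: "finite I
        \<Longrightarrow> Poly_Mapping.lookup (\<Sum>i\<in>I. Poly_Mapping.map ((*) (lk x i)) (bas i)) j =
            (if j \<in> I then Poly_Mapping.lookup x j else 0)" for I j
    by (induction I rule: finite_induct) (auto simp: lookup_single lookup_add lookup_map_mult when_def)
  show ?thesis
    unfolding linext_def
  proof (rule poly_mapping_eqI)
    fix k
    have "lk (\<Sum>i\<in>ks x. Poly_Mapping.map ((*) (lk x i)) (bas i)) k = (if k \<in> ks x then lk x k else 0)"
      by (rule *) simp
    then show "lk (\<Sum>i\<in>ks x. Poly_Mapping.map ((*) (lk x i)) (bas i)) k = lk x k"
      by (simp add: in_keys_iff)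
  qed
qed

lemma linear_linext_comp: "is_linear f \<Longrightarrow> f (linext g x) = linext (\<lambda>a. f (g a)) x"
  by (simp add: linext_def linear_sum linear_smul)

lemma linear_expand: "is_linear f \<Longrightarrow> f x = linext (\<lambda>a. f (bas a)) x"
  by (metis linear_linext_comp linext_expansion)

lemma linear_eqI: "is_linear f \<Longrightarrow> is_linear g \<Longrightarrow> (\<And>a. f (bas a) = g (bas a)) \<Longrightarrow> f = g"
proof
  fix x assume "is_linear f" "is_linear g" "\<And>a. f (bas a) = g (bas a)"
  then show "f x = g x" using linear_expand[of f x] linear_expand[of g x] by simp
qed

lemma linext_cong: "(\<And>a. a \<in> ks x \<Longrightarrow> g a = h a) \<Longrightarrow> linext g x = linext h x"
  by (simp add: linext_def)

lemma keys_linext: fixes g :: "'a \<Rightarrow> 'b \<Rightarrow>\<^sub>0 'k::comm_ring_1"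
  shows "ks (linext g x) \<subseteq> (\<Union>a\<in>ks x. ks (g a))"
proof -
  have "ks (linext g x) \<subseteq> (\<Union>a\<in>ks x. ks (Poly_Mapping.map ((*) (lk x a)) (g a)))"
    unfolding linext_def by (rule keys_sum)
  moreover have "ks (Poly_Mapping.map ((*) c) y) \<subseteq> ks y" for c :: 'k and y :: "'b \<Rightarrow>\<^sub>0 'k"
    by (auto simp: in_keys_iff lookup_map_mult)
  ultimately show ?thesis by blast
qed

lemma linear_comp: "is_linear f \<Longrightarrow> is_linear g \<Longrightarrow> is_linear (f \<circ> g)"
  by (simp add: is_linear_def)

lemma linear_comp': "is_linear f \<Longrightarrow> is_linear g \<Longrightarrow> is_linear (\<lambda>x. f (g x))"
  by (simp add: is_linear_def)

lemma linear_id: "is_linear (\<lambda>x. x)" by (simp add: is_linear_def)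

lemma linear_plus: "is_linear f \<Longrightarrow> is_linear g \<Longrightarrow> is_linear (\<lambda>x. f x + g x)"
  by (simp add: is_linear_def map_mult_add)

lemma linear_minusf: "is_linear f \<Longrightarrow> is_linear g \<Longrightarrow> is_linear (\<lambda>x. f x - g x)"
  by (simp add: is_linear_def map_mult_diff)

lemma linear_const0: "is_linear (\<lambda>x. 0)"
  by (simp add: is_linear_def)


lemma bilinear_eqI:
  assumes "\<And>y. is_linear (\<lambda>x. F x y)" "\<And>y. is_linear (\<lambda>x. G x y)"
    "\<And>x. is_linear (F x)" "\<And>x. is_linear (G x)" "\<And>a b. F (bas a) (bas b) = G (bas a) (bas b)"
  shows "F x y = G x y"
proof -
  have "F (bas a) = G (bas a)" for a by (rule linear_eqI) (use assms in auto)
  then have "(\<lambda>x. F x y) = (\<lambda>x. G x y)" by (intro linear_eqI) (use assms in auto)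
  then show ?thesis by metis
qed

lemma linear_linext_param: "(\<And>a. is_linear (F a)) \<Longrightarrow> is_linear (\<lambda>y. linext (\<lambda>a. F a y) x)"
  unfolding is_linear_def linext_def by (simp add: sum.distrib map_mult_add map_mult_sum map_mult_mult mult.commute)

lemma linear_ring_iff:
  fixes f :: "('a::monoid_add \<Rightarrow>\<^sub>0 'k::comm_ring_1) \<Rightarrow> ('b::monoid_add \<Rightarrow>\<^sub>0 'k)"
  shows "is_linear f \<longleftrightarrow> (\<forall>x y. f (x + y) = f x + f y) \<and> (\<forall>c x. f (Poly_Mapping.single 0 c * x) = Poly_Mapping.single 0 c * f x)"
  unfolding is_linear_def by (simp add: map_mult_conv)

lemma linear_smul_ring:
  fixes f :: "('a::monoid_add \<Rightarrow>\<^sub>0 'k::comm_ring_1) \<Rightarrow> ('b::monoid_add \<Rightarrow>\<^sub>0 'k)"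
  shows "is_linear f \<Longrightarrow> f (Poly_Mapping.single 0 c * x) = Poly_Mapping.single 0 c * f x"
  by (simp add: linear_ring_iff)

lemma single0_lcomm: "x * (Poly_Mapping.single 0 c * y) = Poly_Mapping.single 0 c * (x * (y::'a::comm_monoid_add \<Rightarrow>\<^sub>0 'k::comm_ring_1))"
  by (simp add: mult.left_commute)

lemma linear_mult_right:
  fixes f :: "('a::monoid_add \<Rightarrow>\<^sub>0 'k::comm_ring_1) \<Rightarrow> ('b::comm_monoid_add \<Rightarrow>\<^sub>0 'k)"
  shows "is_linear f \<Longrightarrow> is_linear (\<lambda>x. f x * z)"
  by (simp add: linear_ring_iff distrib_right mult.assoc)

lemma linear_mult_left:
  fixes f :: "('a::monoid_add \<Rightarrow>\<^sub>0 'k::comm_ring_1) \<Rightarrow> ('b::comm_monoid_add \<Rightarrow>\<^sub>0 'k)"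
  shows "is_linear f \<Longrightarrow> is_linear (\<lambda>x. z * f x)"
  by (simp add: linear_ring_iff distrib_left single0_lcomm)

definition mult_map :: "(('a::comm_monoid_add \<Rightarrow>\<^sub>0 'k::comm_ring_1) \<Rightarrow> ('b::comm_monoid_add \<Rightarrow>\<^sub>0 'k)) \<Rightarrow> bool" where
  "mult_map f \<longleftrightarrow> is_linear f \<and> f 1 = 1 \<and> (\<forall>x y. f (x * y) = f x * f y)"

lemma mult_mapI:
  fixes f :: "('a::comm_monoid_add \<Rightarrow>\<^sub>0 'k::comm_ring_1) \<Rightarrow> ('b::comm_monoid_add \<Rightarrow>\<^sub>0 'k)"
  assumes l: "is_linear f" and one: "f (bas 0) = 1" and m: "\<And>a b. f (bas (a + b)) = f (bas a) * f (bas b)"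
  shows "mult_map f"
proof -
  have "f (x * y) = f x * f y" for x y
  proof (rule bilinear_eqI[where F="\<lambda>x y. f (x * y)" and G="\<lambda>x y. f x * f y"])
    show "is_linear (\<lambda>x. f (x * y))" for y
      using l by (simp add: linear_ring_iff distrib_right mult.assoc)
    show "is_linear (\<lambda>y. f (x * y))" for x
      using l by (simp add: linear_ring_iff distrib_left single0_lcomm)
    show "is_linear (\<lambda>x. f x * f y)" for y by (rule linear_mult_right[OF l])
    show "is_linear (\<lambda>y. f x * f y)" for x by (rule linear_mult_left[OF l])
    show "f (bas a * bas b) = f (bas a) * f (bas b)" for a b by (simp add: mult_single m)
  qed
  then show ?thesis using l one by (simp add: mult_map_def)
qed

lemma mult_map_linear: "mult_map f \<Longrightarrow> is_linear f" by (simp add: mult_map_def)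
lemma mult_map_one: "mult_map f \<Longrightarrow> f 1 = 1" by (simp add: mult_map_def)
lemma mult_map_mult: "mult_map f \<Longrightarrow> f (x * y) = f x * f y" by (simp add: mult_map_def)

lemma mult_map_comp: "mult_map f \<Longrightarrow> mult_map g \<Longrightarrow> mult_map (\<lambda>x. f (g x))"
  by (simp add: mult_map_def linear_comp')

lemma mult_map_prod_mset: "mult_map f \<Longrightarrow> f (prod_mset (image_mset h M)) = prod_mset (image_mset (\<lambda>x. f (h x)) M)"
  by (induction M) (simp_all add: mult_map_one mult_map_mult)

lemma single_zero_one: "Poly_Mapping.single 0 1 = (1 :: 'a::monoid_add \<Rightarrow>\<^sub>0 'k::semiring_1)"
  by simp

section \<open>Tensors\<close>

definition tens :: "('a \<Rightarrow>\<^sub>0 'k::comm_ring_1) \<Rightarrow> ('b \<Rightarrow>\<^sub>0 'k) \<Rightarrow> ('a \<times> 'b \<Rightarrow>\<^sub>0 'k)" where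
  "tens x y = linext (\<lambda>a. linext (\<lambda>b. bas (a, b)) y) x"

lemma tens_linear1: "is_linear (\<lambda>x. tens x y)"
  unfolding tens_def by (rule is_linear_linext)

lemma tens_linear2: "is_linear (\<lambda>y. tens x y)"
  unfolding tens_def by (rule linear_linext_param) (rule is_linear_linext)

lemma tens_bas[simp]: "tens (bas a) (bas b) = bas (a, b)"
  by (simp add: tens_def)

lemma tensor_tens: "tensor = tens"
proof (intro ext)
  fix x y :: "'k::comm_ring_1 H"
  show "tensor x y = tens x y"
    unfolding tensor_def tens_def linext_def
    by (simp add: map_mult_sum map_mult_single)
qed

lemma tens_add1: "tens (x + x') y = tens x y + tens x' y"
  using tens_linear1 linear_add by fastforce
lemma tens_add2: "tens x (y + y') = tens x y + tens x y'"
  using tens_linear2 linear_add by fastforce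
lemma tens_zero1[simp]: "tens 0 y = 0"
  using tens_linear1 linear_0 by fastforce
lemma tens_zero2[simp]: "tens x 0 = 0"
  using tens_linear2 linear_0 by fastforce
lemma tens_diff1: "tens (x - x') y = tens x y - tens x' y"
  using tens_linear1 linear_diff by fastforce
lemma tens_diff2: "tens x (y - y') = tens x y - tens x y'"
  using tens_linear2 linear_diff by fastforce

lemma tens_smul1: "tens (Poly_Mapping.single 0 c * x) y = Poly_Mapping.single 0 c * tens (x::'a::monoid_add \<Rightarrow>\<^sub>0 'k::comm_ring_1) (y::'b::monoid_add \<Rightarrow>\<^sub>0 'k)"
  by (rule linear_smul_ring[OF tens_linear1])
lemma tens_smul2: "tens x (Poly_Mapping.single 0 c * y) = Poly_Mapping.single 0 c * tens (x::'a::monoid_add \<Rightarrow>\<^sub>0 'k::comm_ring_1) (y::'b::monoid_add \<Rightarrow>\<^sub>0 'k)"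
  by (rule linear_smul_ring[OF tens_linear2])

lemma tens_mult:
  fixes x x' :: "'a::comm_monoid_add \<Rightarrow>\<^sub>0 'k::comm_ring_1" and y y' :: "'b::comm_monoid_add \<Rightarrow>\<^sub>0 'k"
  shows "tens x y * tens x' y' = tens (x * x') (y * y')"
proof (rule bilinear_eqI[where F="\<lambda>x y. tens x y * tens x' y'" and G="\<lambda>x y. tens (x * x') (y * y')"])
  show "is_linear (\<lambda>x. tens x y * tens x' y')" for y by (rule linear_mult_right[OF tens_linear1])
  show "is_linear (\<lambda>y. tens x y * tens x' y')" for x by (rule linear_mult_right[OF tens_linear2])
  show "is_linear (\<lambda>x. tens (x * x') (y * y'))" for y
    by (simp add: linear_ring_iff distrib_right mult.assoc tens_add1 tens_smul1)
  show "is_linear (\<lambda>y. tens (x * x') (y * y'))" for x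
    by (simp add: linear_ring_iff distrib_right mult.assoc tens_add2 tens_smul2)
  fix a b
  show "tens (bas a) (bas b) * tens x' y' = tens (bas a * x') (bas b * y')"
  proof (rule bilinear_eqI[where F="\<lambda>x' y'. tens (bas a) (bas b) * tens x' y'" and G="\<lambda>x' y'. tens (bas a * x') (bas b * y')"])
    show "is_linear (\<lambda>x. tens (bas a) (bas b) * tens x y)" for y by (rule linear_mult_left[OF tens_linear1])
    show "is_linear (\<lambda>y. tens (bas a) (bas b) * tens x y)" for x by (rule linear_mult_left[OF tens_linear2])
    show "is_linear (\<lambda>x. tens (bas a * x) (bas b * y))" for y
      by (simp add: linear_ring_iff distrib_left single0_lcomm tens_add1 tens_smul1)
    show "is_linear (\<lambda>y. tens (bas a * x) (bas b * y))" for x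
      by (simp add: linear_ring_iff distrib_left single0_lcomm tens_add2 tens_smul2)
    show "tens (bas a) (bas b) * tens (bas a') (bas b') = tens (bas a * bas a') (bas b * bas b')" for a' b'
      by (simp add: mult_single)
  qed
qed

lemma tens_one[simp]: "tens 1 1 = (1 :: ('a::comm_monoid_add \<times> 'b::comm_monoid_add) \<Rightarrow>\<^sub>0 'k::comm_ring_1)"
  by (metis single_zero_one tens_bas zero_prod_def)

lemma tens_bas1: "tens (bas a) y = linext (\<lambda>b. bas (a, b)) y"
  by (simp add: tens_def)

lemma tens_bas2: "tens x (bas b) = linext (\<lambda>a. bas (a, b)) x"
  by (simp add: tens_def)

definition tmap :: "(('a \<Rightarrow>\<^sub>0 'k::comm_ring_1) \<Rightarrow> ('c \<Rightarrow>\<^sub>0 'k)) \<Rightarrow> (('b \<Rightarrow>\<^sub>0 'k) \<Rightarrow> ('d \<Rightarrow>\<^sub>0 'k)) \<Rightarrow> ('a \<times> 'b \<Rightarrow>\<^sub>0 'k) \<Rightarrow> ('c \<times> 'd \<Rightarrow>\<^sub>0 'k)" where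
  "tmap F G = linext (\<lambda>(a, b). tens (F (bas a)) (G (bas b)))"

lemma tensor_map_tmap: "tensor_map = tmap"
  by (intro ext) (simp add: tensor_map_def tmap_def tensor_tens fr_def)

lemma tmap_linear: "is_linear (tmap F G)"
  unfolding tmap_def by (rule is_linear_linext)

lemma tmap_bas[simp]: "tmap F G (bas (a, b)) = tens (F (bas a)) (G (bas b))"
  by (simp add: tmap_def)

lemma tmap_tens: "is_linear F \<Longrightarrow> is_linear G \<Longrightarrow> tmap F G (tens x y) = tens (F x) (G y)"
  by (rule bilinear_eqI[where F="\<lambda>x y. tmap F G (tens x y)" and G="\<lambda>x y. tens (F x) (G y)"])
   (auto intro: linear_comp'[OF tmap_linear tens_linear1] linear_comp'[OF tmap_linear tens_linear2]
     linear_comp'[OF tens_linear1] linear_comp'[OF tens_linear2])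

lemma tmap_mult_map:
  fixes F :: "('a::comm_monoid_add \<Rightarrow>\<^sub>0 'k::comm_ring_1) \<Rightarrow> ('c::comm_monoid_add \<Rightarrow>\<^sub>0 'k)"
    and G :: "('b::comm_monoid_add \<Rightarrow>\<^sub>0 'k) \<Rightarrow> ('d::comm_monoid_add \<Rightarrow>\<^sub>0 'k)"
  assumes "mult_map F" "mult_map G" shows "mult_map (tmap F G)"
proof (rule mult_mapI[OF tmap_linear])
  show "tmap F G (bas 0) = 1" using assms by (simp add: zero_prod_def mult_map_one)
  show "tmap F G (bas (a + b)) = tmap F G (bas a) * tmap F G (bas b)" for a b
  proof (cases a; cases b)
    fix a1 a2 b1 b2 assume ab: "a = (a1, a2)" "b = (b1, b2)"
    have "F (bas (a1 + b1)) = F (bas a1) * F (bas b1)"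
      using mult_map_mult[OF assms(1), of "bas a1" "bas b1"] by (simp add: mult_single)
    moreover have "G (bas (a2 + b2)) = G (bas a2) * G (bas b2)"
      using mult_map_mult[OF assms(2), of "bas a2" "bas b2"] by (simp add: mult_single)
    ultimately show ?thesis using ab by (simp add: tens_mult)
  qed
qed

lemma tmap_comp: "is_linear F \<Longrightarrow> is_linear G \<Longrightarrow> tmap F G (tmap F' G' z) = tmap (\<lambda>x. F (F' x)) (\<lambda>x. G (G' x)) z"
  by (rule fun_cong[of _ _ z], rule linear_eqI) (auto intro: linear_comp'[OF tmap_linear tmap_linear] tmap_linear simp: tmap_tens)

lemma tmap_id: "tmap (\<lambda>x. x) (\<lambda>x. x) z = z"
  by (rule fun_cong[of _ _ z], rule linear_eqI[where g="\<lambda>x. x", OF tmap_linear linear_id]) auto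


lemma fr_bas: "fr w = bas w" by (simp add: fr_def)

lemma fsize_add[simp]: "fsize (a + b) = fsize a + fsize b" by (simp add: fsize_def)
lemma fsize_empty[simp]: "fsize {#} = 0" by (simp add: fsize_def)
lemma fsize_single[simp]: "fsize {#t#} = tsize t" by (simp add: fsize_def)
lemma fsize_add_mset[simp]: "fsize (add_mset t w) = tsize t + fsize w" by (simp add: fsize_def)
lemma tsize_Node: "tsize (Node ts) = 1 + fsize ts" by (simp add: fsize_def)
lemma tsize_pos: "tsize t > 0" by (cases t) simp
lemma fsize_empty_iff: "fsize w = 0 \<longleftrightarrow> w = {#}"
  by (induction w) (auto simp: tsize_pos)

lemma bas_prod: "(bas w :: 'k::comm_ring_1 H) = prod_mset (image_mset (\<lambda>t. bas {#t#}) w)"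
proof (induction w)
  case empty then show ?case by simp
next
  case (add t w)
  have "(bas (add_mset t w) :: 'k H) = bas {#t#} * bas w" by (simp add: mult_single)
  then show ?case using add by simp
qed

lemma Bplus_linear: "is_linear Bplus" unfolding Bplus_def by (rule is_linear_linext)
lemma Bplus_bas[simp]: "Bplus (bas w) = bas {#Node w#}" by (simp add: Bplus_def fr_bas)

lemma idB_linear: "is_linear id_tensor_Bplus" unfolding id_tensor_Bplus_def by (rule is_linear_linext)
lemma idB_bas[simp]: "id_tensor_Bplus (bas (a, b)) = bas (a, {#Node b#})" by (simp add: id_tensor_Bplus_def)

lemma Delta_linear: "is_linear Delta" unfolding Delta_def by (rule is_linear_linext)
lemma Delta_bas[simp]: "Delta (bas w) = cop_forest w" by (simp add: Delta_def)

lemma cop_forest_add: "cop_forest (a + b) = cop_forest a * cop_forest b"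
  by (simp add: cop_forest_def)

lemma Delta_mult: "mult_map (Delta :: 'k::comm_ring_1 H \<Rightarrow> 'k HH)"
proof (rule mult_mapI[OF Delta_linear])
  show "Delta (bas 0) = 1" unfolding Delta_bas by (simp add: cop_forest_def)
  show "Delta (bas (a + b)) = Delta (bas a) * Delta (bas b)" for a b
    unfolding Delta_bas by (rule cop_forest_add)
qed

lemma cop_forest_single[simp]: "cop_forest {#t#} = cop_tree t" by (simp add: cop_forest_def)

lemma cop_tree_Node: "cop_tree (Node ts) = bas ({#Node ts#}, {#}) + id_tensor_Bplus (Delta (bas ts))"
  by (simp add: cop_forest_def)

definition idA :: "'k::comm_ring_1 dual \<Rightarrow> 'k HH \<Rightarrow> 'k H" where "idA = id_tensor_dual"
lemma idA_linear: "is_linear (id_tensor_dual \<alpha>)" unfolding id_tensor_dual_def by (rule is_linear_linext)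
lemma idA_bas[simp]: "id_tensor_dual \<alpha> (bas (a, b)) = Poly_Mapping.single a (\<alpha> b)" by (simp add: id_tensor_dual_def)

definition DL :: "'k::comm_ring_1 dual \<Rightarrow> 'k H \<Rightarrow> 'k H" where
  "DL \<alpha> = linext (\<lambda>w. Poly_Mapping.single {#} (\<alpha> w))"
lemma DL_linear: "is_linear (DL \<alpha>)" unfolding DL_def by (rule is_linear_linext)
lemma DL_bas[simp]: "DL \<alpha> (bas w) = Poly_Mapping.single {#} (\<alpha> w)" by (simp add: DL_def)

lemma DL_dapply: "DL \<alpha> h = Poly_Mapping.single {#} (dapply \<alpha> h)"
proof (rule poly_mapping_eqI)
  fix k
  show "lk (DL \<alpha> h) k = lk (Poly_Mapping.single {#} (dapply \<alpha> h)) k"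
    unfolding DL_def linext_def dapply_def
    by (simp add: lookup_sum lookup_map_mult lookup_single when_def sum_distrib_left)
qed

lemma dapply_DL: "dapply \<alpha> h = lk (DL \<alpha> h) {#}"
  by (simp add: DL_dapply)

lemma dapply_add: "dapply \<alpha> (x + y) = dapply \<alpha> x + dapply \<alpha> y"
  by (simp add: dapply_DL linear_add[OF DL_linear] lookup_add)
lemma dapply_smul: "dapply \<alpha> (Poly_Mapping.single 0 c * x) = c * dapply \<alpha> x"
  by (simp add: dapply_DL linear_smul_ring[OF DL_linear] lookup_single0_mult)
lemma dapply_bas[simp]: "dapply \<alpha> (bas w) = \<alpha> w"
  by (simp add: dapply_DL)
lemma dapply_zero[simp]: "dapply \<alpha> 0 = 0"
  by (simp add: dapply_DL linear_0[OF DL_linear])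
lemma dapply_diff: "dapply \<alpha> (x - y) = dapply \<alpha> x - dapply \<alpha> y"
  by (simp add: dapply_DL linear_diff[OF DL_linear] lookup_minus)

lemma delta_alt: "delta \<alpha> h = id_tensor_dual \<alpha> (Delta h) - DL \<alpha> h"
  by (simp add: delta_def DL_dapply)

lemma delta_linear: "is_linear (delta \<alpha>)"
  unfolding delta_alt[abs_def]
  by (intro linear_minusf linear_comp'[OF idA_linear Delta_linear] DL_linear)

lemma phi_linear: "is_linear (phi M)" unfolding phi_def by (rule is_linear_linext)
lemma phi_bas: "phi M (bas w) = prod_mset (image_mset (phi_tree M) w)" by (simp add: phi_def)

lemma phi_mult: "mult_map (phi M)"
proof (rule mult_mapI[OF phi_linear])
  show "phi M (bas 0) = 1" unfolding phi_bas by simp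
  show "phi M (bas (a + b)) = phi M (bas a) * phi M (bas b)" for a b
    unfolding phi_bas by simp
qed

lemma phi_Bplus: "is_linear M \<Longrightarrow> phi M (Bplus x) = M (phi M x)"
  by (rule fun_cong[of _ _ x], rule linear_eqI)
     (auto intro: linear_comp'[OF phi_linear Bplus_linear] linear_comp'[OF _ phi_linear] simp: phi_bas)

lemma phi_unique:
  assumes f: "mult_map f" and fB: "\<And>x. f (Bplus x) = M (f x)"
  shows "f = phi M"
proof -
  have tree: "f (bas {#T#}) = phi_tree M T" for T
  proof (induction T)
    case (Node ts)
    have "f (bas {#Node ts#}) = M (f (bas ts))" using fB[of "bas ts"] by simp
    also have "f (bas ts) = prod_mset (image_mset (phi_tree M) ts)"
      apply (subst bas_prod)
      apply (simp add: mult_map_prod_mset[OF f])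
      using Node by (metis (mono_tags, lifting) image_mset_cong)
    finally show ?case by simp
  qed
  show ?thesis
  proof (rule linear_eqI[OF mult_map_linear[OF f] phi_linear])
    fix w
    show "f (bas w) = phi M (bas w)"
      apply (subst bas_prod)
      by (simp add: mult_map_prod_mset[OF f] tree phi_bas)
  qed
qed

lemma phi_Bplus_id: "phi Bplus = (\<lambda>x::'k::comm_ring_1 H. x)"
  by (rule phi_unique[symmetric]) (auto simp: mult_map_def linear_id)


declare tsize.simps[simp del]
declare tsize_Node[simp]

definition le_deg :: "nat \<Rightarrow> 'k::comm_ring_1 H \<Rightarrow> bool" where "le_deg n x \<longleftrightarrow> (\<forall>v\<in>ks x. fsize v \<le> n)"
definition lo_deg :: "nat \<Rightarrow> 'k::comm_ring_1 H \<Rightarrow> bool" where "lo_deg n x \<longleftrightarrow> (\<forall>v\<in>ks x. fsize v < n)"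
definition grad :: "nat \<Rightarrow> 'k::comm_ring_1 HH \<Rightarrow> bool" where "grad n z \<longleftrightarrow> (\<forall>p\<in>ks z. fsize (fst p) + fsize (snd p) = n)"

lemma keys_diff_sub: "ks (x - y) \<subseteq> ks x \<union> ks (y :: 'a \<Rightarrow>\<^sub>0 'k::ab_group_add)"
  by (auto simp: in_keys_iff lookup_minus)

lemma lo_add: "lo_deg n x \<Longrightarrow> lo_deg n y \<Longrightarrow> lo_deg n (x + y)"
  unfolding lo_deg_def using keys_add[of x y] by auto
lemma lo_diff: "lo_deg n x \<Longrightarrow> lo_deg n y \<Longrightarrow> lo_deg n (x - y)"
  unfolding lo_deg_def using keys_diff_sub[of x y] by auto
lemma le_add: "le_deg n x \<Longrightarrow> le_deg n y \<Longrightarrow> le_deg n (x + y)"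
  unfolding le_deg_def using keys_add[of x y] by auto
lemma le_diff: "le_deg n x \<Longrightarrow> le_deg n y \<Longrightarrow> le_deg n (x - y)"
  unfolding le_deg_def using keys_diff_sub[of x y] by auto
lemma lo_le: "lo_deg n x \<Longrightarrow> le_deg n x"
  unfolding lo_deg_def le_deg_def by auto
lemma le_mono: "le_deg m x \<Longrightarrow> m \<le> n \<Longrightarrow> le_deg n x"
  unfolding le_deg_def by auto
lemma le_lo_Suc: "le_deg n x \<Longrightarrow> lo_deg (Suc n) x"
  unfolding lo_deg_def le_deg_def by auto
lemma le_bas: "le_deg (fsize w) (bas w)"
  unfolding le_deg_def by simp
lemma lo_linext: "(\<And>w. w \<in> ks x \<Longrightarrow> lo_deg n (g w)) \<Longrightarrow> lo_deg n (linext g x)"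
  unfolding lo_deg_def using keys_linext[of g x] by auto
lemma le_linext: "(\<And>w. w \<in> ks x \<Longrightarrow> le_deg n (g w)) \<Longrightarrow> le_deg n (linext g x)"
  unfolding le_deg_def using keys_linext[of g x] by auto

lemma le_lo_mult: "le_deg m x \<Longrightarrow> lo_deg n y \<Longrightarrow> lo_deg (m + n) (x * y)"
  unfolding lo_deg_def le_deg_def using keys_mult[of x y] by fastforce
lemma lo_le_mult: "lo_deg m x \<Longrightarrow> le_deg n y \<Longrightarrow> lo_deg (m + n) (x * y)"
  unfolding lo_deg_def le_deg_def using keys_mult[of x y] by fastforce
lemma le_le_mult: "le_deg m x \<Longrightarrow> le_deg n y \<Longrightarrow> le_deg (m + n) (x * y)"
  unfolding le_deg_def using keys_mult[of x y] by fastforce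

lemma grad_mult: "grad m z \<Longrightarrow> grad n z' \<Longrightarrow> grad (m + n) (z * z')"
  unfolding grad_def using keys_mult[of z z'] by fastforce
lemma grad_add: "grad n z \<Longrightarrow> grad n z' \<Longrightarrow> grad n (z + z')"
  unfolding grad_def using keys_add[of z z'] by auto
lemma grad_one: "grad 0 1"
  unfolding grad_def by (simp add: zero_prod_def)
lemma grad_idB: "grad n z \<Longrightarrow> grad (Suc n) (id_tensor_Bplus z)"
  unfolding grad_def id_tensor_Bplus_def using keys_linext[of "\<lambda>(a, b). bas (a, {#Node b#})" z]
  by (fastforce simp: tsize_Node)

lemma grad_cop_tree: "grad (tsize T) (cop_tree T :: 'k::comm_ring_1 HH)"
proof (induction T)
  case (Node ts)
  have "grad (fsize ts) (prod_mset (image_mset (cop_tree :: _ \<Rightarrow> 'k HH) ts))"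
    using Node
  proof (induction ts)
    case empty then show ?case by (simp add: grad_one)
  next
    case (add t ts)
    have "grad (tsize t) (cop_tree t :: 'k HH)" using add.prems[of t] by simp
    moreover have "grad (fsize ts) (prod_mset (image_mset (cop_tree :: _ \<Rightarrow> 'k HH) ts))" using add by simp
    ultimately show ?case using grad_mult by fastforce
  qed
  then have "grad (Suc (fsize ts)) (id_tensor_Bplus (Delta (bas ts)) :: 'k HH)"
    by (simp add: grad_idB cop_forest_def)
  moreover have "grad (Suc (fsize ts)) (bas ({#Node ts#}, {#}) :: 'k HH)"
    by (simp add: grad_def tsize_Node)
  ultimately show ?case by (simp add: cop_tree_Node tsize_Node grad_add del: cop_tree.simps)
qed

lemma grad_cop_forest: "grad (fsize w) (cop_forest w)"
proof (induction w)
  case empty then show ?case by (simp add: grad_one cop_forest_def)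
next
  case (add t w)
  then show ?case using grad_mult[OF grad_cop_tree[of t]] by (simp add: cop_forest_def)
qed

lemma le_delta_bas: "le_deg (fsize w) (delta \<alpha> (bas w))"
proof -
  have "le_deg (fsize w) (id_tensor_dual \<alpha> (cop_forest w))"
    unfolding id_tensor_dual_def
  proof (rule le_linext)
    fix p assume "p \<in> ks (cop_forest w)"
    then have "fsize (fst p) \<le> fsize w" using grad_cop_forest[of w] unfolding grad_def by fastforce
    then show "le_deg (fsize w) ((\<lambda>(a, b). Poly_Mapping.single a (\<alpha> b)) p)"
      by (cases p) (auto simp: le_deg_def)
  qed
  moreover have "le_deg (fsize w) (DL \<alpha> (bas w))" by (simp add: le_deg_def)
  ultimately show ?thesis by (simp add: delta_alt le_diff)
qed

lemma le_delta: "le_deg n x \<Longrightarrow> le_deg n (delta \<alpha> x)"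
  apply (subst linear_expand[OF delta_linear])
  apply (rule le_linext)
  using le_delta_bas le_mono unfolding le_deg_def by blast

lemma lo_Bplus: "lo_deg n x \<Longrightarrow> lo_deg (Suc n) (Bplus x)"
  unfolding Bplus_def fr_bas by (rule lo_linext) (auto simp: lo_deg_def tsize_Node)

definition Lop :: "'k::comm_ring_1 dual \<Rightarrow> 'k H \<Rightarrow> 'k H" where "Lop \<alpha> h = Bplus h + delta \<alpha> h"

lemma theta_Lop: "theta \<alpha> = phi (Lop \<alpha>)"
  by (simp add: theta_def Lop_def[abs_def])

lemma Lop_linear: "is_linear (Lop \<alpha>)"
  unfolding Lop_def[abs_def] by (rule linear_plus[OF Bplus_linear delta_linear])

lemma theta_Bplus: "theta \<alpha> (Bplus x) = Bplus (theta \<alpha> x) + delta \<alpha> (theta \<alpha> x)"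
  unfolding theta_Lop by (simp add: phi_Bplus[OF Lop_linear] Lop_def)

lemma forest_tri:
  assumes "\<And>T. T \<in># w \<Longrightarrow> lo_deg (tsize T) (t T - bas {#T#})"
  shows "lo_deg (fsize w) (prod_mset (image_mset t w) - (bas w :: 'k::comm_ring_1 H))"
  using assms
proof (induction w)
  case empty then show ?case by (simp add: lo_deg_def)
next
  case (add T w)
  define P where "P = prod_mset (image_mset t w)"
  have IH: "lo_deg (fsize w) (P - bas w)" using add by (simp add: P_def)
  have r: "lo_deg (tsize T) (t T - bas {#T#})" using add by simp
  have Ple: "le_deg (fsize w) P"
    using le_add[OF lo_le[OF IH] le_bas[of w]] by simp
  have eq: "t T * P - (bas (add_mset T w) :: 'k H) = (t T - bas {#T#}) * P + bas {#T#} * (P - bas w)"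
    by (simp add: algebra_simps mult_single)
  have "lo_deg (tsize T + fsize w) ((t T - bas {#T#}) * P)" by (rule lo_le_mult[OF r Ple])
  moreover have "lo_deg (tsize T + fsize w) (bas {#T#} * (P - bas w))"
    using le_lo_mult[OF le_bas[of "{#T#}"] IH] by simp
  ultimately have "lo_deg (tsize T + fsize w) (t T * P - bas (add_mset T w))"
    unfolding eq by (rule lo_add)
  then show ?case by (simp add: P_def)
qed

lemma tree_tri: "lo_deg (tsize T) (phi_tree (Lop \<alpha>) T - (bas {#T#} :: 'k::comm_ring_1 H))"
proof (induction T)
  case (Node ts)
  define P where "P = prod_mset (image_mset (phi_tree (Lop \<alpha>)) ts)"
  have IH: "lo_deg (fsize ts) (P - bas ts)" unfolding P_def by (rule forest_tri) (use Node in auto)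
  have Ple: "le_deg (fsize ts) P"
    using le_add[OF lo_le[OF IH] le_bas[of ts]] by simp
  have "phi_tree (Lop \<alpha>) (Node ts) - bas {#Node ts#} = Bplus (P - bas ts) + delta \<alpha> P"
    by (simp add: P_def Lop_def linear_diff[OF Bplus_linear])
  moreover have "lo_deg (Suc (fsize ts)) (Bplus (P - bas ts))" by (rule lo_Bplus[OF IH])
  moreover have "lo_deg (Suc (fsize ts)) (delta \<alpha> P)" by (rule le_lo_Suc[OF le_delta[OF Ple]])
  ultimately show ?case by (simp add: tsize_Node lo_add)
qed

lemma theta_tri: fixes \<alpha> :: "'k::comm_ring_1 dual"
  shows "\<forall>v\<in>ks (theta \<alpha> (fr w) - fr w). fsize v < fsize w"
proof -
  have "lo_deg (fsize w) (theta \<alpha> (fr w) - fr w)"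
    unfolding theta_Lop fr_bas phi_bas by (rule forest_tri) (rule tree_tri)
  then show ?thesis by (simp add: lo_deg_def)
qed


lemma mult_map_eq_forest:
  assumes "mult_map f" "mult_map g" "\<And>T. T \<in># ts \<Longrightarrow> f (bas {#T#}) = g (bas {#T#})"
  shows "f (bas ts :: 'k::comm_ring_1 H) = g (bas ts)"
  apply (subst (1 2) bas_prod)
  using assms by (simp add: mult_map_prod_mset cong: image_mset_cong)

lemma mult_map_eq_trees:
  assumes "mult_map f" "mult_map g" "\<And>T. f (bas {#T#} :: 'k::comm_ring_1 H) = g (bas {#T#})"
  shows "f = g"
  by (rule linear_eqI[OF mult_map_linear[OF assms(1)] mult_map_linear[OF assms(2)]])
     (rule mult_map_eq_forest[OF assms(1,2)], simp add: assms(3))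

lemma id_mult_map: "mult_map (\<lambda>x::'k::comm_ring_1 H. x)"
  by (simp add: mult_map_def linear_id)

lemma tmap_id_diff: "is_linear F \<Longrightarrow> is_linear G \<Longrightarrow> tmap (\<lambda>x. x) (\<lambda>x. F x - G x) z = tmap (\<lambda>x. x) F z - tmap (\<lambda>x. x) G z"
  by (rule fun_cong[of _ _ z], rule linear_eqI[OF tmap_linear linear_minusf[OF tmap_linear tmap_linear]])
     (auto simp: tens_diff2)

lemma tmap_id_add: "is_linear F \<Longrightarrow> is_linear G \<Longrightarrow> tmap (\<lambda>x. x) (\<lambda>x. F x + G x) z = tmap (\<lambda>x. x) F z + tmap (\<lambda>x. x) G z"
  by (rule fun_cong[of _ _ z], rule linear_eqI[OF tmap_linear linear_plus[OF tmap_linear tmap_linear]])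
     (auto simp: tens_add2)

lemma idB_tmap: "id_tensor_Bplus = tmap (\<lambda>x. x) Bplus"
  by (rule linear_eqI[OF idB_linear tmap_linear]) auto

lemma single_as_smul: "Poly_Mapping.single a c = Poly_Mapping.single 0 c * (bas a :: 'a::monoid_add \<Rightarrow>\<^sub>0 'k::comm_ring_1)"
  by (simp add: mult_single)

lemma linear_single: fixes f :: "('a::monoid_add \<Rightarrow>\<^sub>0 'k::comm_ring_1) \<Rightarrow> ('b::monoid_add \<Rightarrow>\<^sub>0 'k)"
  shows "is_linear f \<Longrightarrow> f (Poly_Mapping.single a c) = Poly_Mapping.single 0 c * f (bas a)"
  by (simp add: single_as_smul[of a c] linear_smul_ring)

lemma tens_single1: fixes a :: "'a::monoid_add" and y :: "'b::monoid_add \<Rightarrow>\<^sub>0 'k::comm_ring_1"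
  shows "tens (Poly_Mapping.single a c) y = Poly_Mapping.single 0 c * tens (bas a) y"
  by (simp add: single_as_smul[of a c] tens_smul1)

lemma tens_single2: fixes b :: "'b::monoid_add" and x :: "'a::monoid_add \<Rightarrow>\<^sub>0 'k::comm_ring_1"
  shows "tens x (Poly_Mapping.single b c) = Poly_Mapping.single 0 c * tens x (bas b)"
  by (simp add: single_as_smul[of b c] tens_smul2)

lemma Delta_one[simp]: "Delta 1 = 1"
  by (rule mult_map_one[OF Delta_mult])

lemma tens_bas_one: "tens (bas a) 1 = bas (a, 0)"
  using tens_bas[of a 0] by simp

lemma tens_one_bas: "tens 1 (bas b) = bas (0, b)"
  using tens_bas[of 0 b] by simp

lemma tens_single: fixes a :: "'a::monoid_add" and b :: "'b::monoid_add"
  shows "tens (Poly_Mapping.single a c) (Poly_Mapping.single b d) = Poly_Mapping.single (a, b) (c * d :: 'k::comm_ring_1)"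
proof -
  have "tens (Poly_Mapping.single a c) (Poly_Mapping.single b d) = tens (Poly_Mapping.single 0 c * bas a) (Poly_Mapping.single 0 d * bas b)"
    by (simp only: single_as_smul[of a c] single_as_smul[of b d])
  also have "\<dots> = Poly_Mapping.single 0 d * (Poly_Mapping.single 0 c * bas (a, b))"
    by (simp only: tens_smul1 tens_smul2 tens_bas)
  also have "\<dots> = Poly_Mapping.single (a, b) (c * d)"
    by (simp add: mult_single mult.commute)
  finally show ?thesis .
qed

lemma tens_single_one: fixes a :: "'a::monoid_add"
  shows "tens (Poly_Mapping.single a c) (1 :: 'b::monoid_add \<Rightarrow>\<^sub>0 'k::comm_ring_1) = Poly_Mapping.single (a, 0) c"
  using tens_single[of a c 0 1] by simp

subsection \<open>Coassociativity\<close>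

type_synonym 'k H3 = "(forest \<times> forest \<times> forest) \<Rightarrow>\<^sub>0 'k"

definition ra :: "(('a \<times> 'b) \<times> 'c \<Rightarrow>\<^sub>0 'k::comm_ring_1) \<Rightarrow> ('a \<times> ('b \<times> 'c) \<Rightarrow>\<^sub>0 'k)" where
  "ra = linext (\<lambda>((a, b), c). bas (a, (b, c)))"

lemma ra_linear: "is_linear ra" unfolding ra_def by (rule is_linear_linext)
lemma ra_bas[simp]: "ra (bas ((a, b), c)) = bas (a, (b, c))" by (simp add: ra_def)

lemma ra_mult: "mult_map (ra :: (('a::comm_monoid_add \<times> 'b::comm_monoid_add) \<times> 'c::comm_monoid_add \<Rightarrow>\<^sub>0 'k::comm_ring_1) \<Rightarrow> _)"
proof (rule mult_mapI[OF ra_linear])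
  show "ra (bas 0 :: ((('a \<times> 'b) \<times> 'c) \<Rightarrow>\<^sub>0 'k)) = 1"
    by (simp add: zero_prod_def flip: single_zero_one)
  show "ra (bas (p + q) :: ((('a \<times> 'b) \<times> 'c) \<Rightarrow>\<^sub>0 'k)) = ra (bas p) * ra (bas q)" for p q
    by (cases p; cases q) (auto simp: mult_single)
qed

definition Rc :: "'c \<Rightarrow> ('a \<times> 'b \<Rightarrow>\<^sub>0 'k::comm_ring_1) \<Rightarrow> ('a \<times> ('b \<times> 'c) \<Rightarrow>\<^sub>0 'k)" where
  "Rc c = linext (\<lambda>(p, q). bas (p, (q, c)))"
lemma Rc_linear: "is_linear (Rc c)" unfolding Rc_def by (rule is_linear_linext)
lemma Rc_bas[simp]: "Rc c (bas (p, q)) = bas (p, (q, c))" by (simp add: Rc_def)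

lemma ra_tens: "ra (tens Z (bas c)) = Rc c Z"
  by (rule fun_cong[of _ _ Z], rule linear_eqI[OF linear_comp'[OF ra_linear tens_linear1] Rc_linear]) auto

lemma ra_tens1: "ra (tens Z 1) = Rc 0 Z"
  using ra_tens[of Z 0] by simp

lemma Delta_tree: "Delta (bas {#Node ts#}) = bas ({#Node ts#}, {#}) + id_tensor_Bplus (Delta (bas ts))"
  by (simp add: cop_tree_Node del: cop_tree.simps)

definition id3B :: "'k::comm_ring_1 H3 \<Rightarrow> 'k H3" where
  "id3B = linext (\<lambda>(a, (b, c)). bas (a, (b, {#Node c#})))"

lemma id3B_linear: "is_linear id3B" unfolding id3B_def by (rule is_linear_linext)
lemma id3B_bas[simp]: "id3B (bas (a, (b, c))) = bas (a, (b, {#Node c#}))" by (simp add: id3B_def)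

definition R0' :: "'k::comm_ring_1 HH \<Rightarrow> 'k H3" where
  "R0' = linext (\<lambda>(a, b). bas (a, ({#Node b#}, {#})))"
lemma R0'_linear: "is_linear R0'" unfolding R0'_def by (rule is_linear_linext)
lemma R0'_bas[simp]: "R0' (bas (a, b)) = bas (a, ({#Node b#}, {#}))" by (simp add: R0'_def)

lemma idA_lemma: "ra (tmap Delta (\<lambda>x. x) (id_tensor_Bplus Z)) = id3B (ra (tmap Delta (\<lambda>x. x) (Z :: 'k::comm_ring_1 HH)))"
proof (rule fun_cong[of _ _ Z], rule linear_eqI)
  show "is_linear (\<lambda>Z. ra (tmap Delta (\<lambda>x. x) (id_tensor_Bplus Z)))"
    by (intro linear_comp'[OF ra_linear] linear_comp'[OF tmap_linear] idB_linear)
  show "is_linear (\<lambda>Z. id3B (ra (tmap Delta (\<lambda>x. x) (Z :: 'k::comm_ring_1 HH))))"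
    by (intro linear_comp'[OF id3B_linear] linear_comp'[OF ra_linear] tmap_linear)
  fix p :: "forest \<times> forest"
  obtain a b where p: "p = (a, b)" by (cases p)
  have "Rc {#Node b#} Y = id3B (Rc b Y)" for Y :: "'k HH"
    by (rule fun_cong[of _ _ Y], rule linear_eqI[OF Rc_linear linear_comp'[OF id3B_linear Rc_linear]]) auto
  then show "ra (tmap Delta (\<lambda>x. x) (id_tensor_Bplus (bas p))) = id3B (ra (tmap Delta (\<lambda>x. x) (bas p :: 'k HH)))"
    by (simp add: p ra_tens)
qed

lemma tens_idB: "tens (bas a) (id_tensor_Bplus Y) = id3B (tens (bas a) (Y :: 'k::comm_ring_1 HH))"
  by (rule fun_cong[of _ _ Y], rule linear_eqI[OF linear_comp'[OF tens_linear2 idB_linear] linear_comp'[OF id3B_linear tens_linear2]]) auto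

lemma idB_lemma: "tmap (\<lambda>x. x) Delta (id_tensor_Bplus Z) = R0' Z + id3B (tmap (\<lambda>x. x) Delta (Z :: 'k::comm_ring_1 HH))"
proof (rule fun_cong[of _ _ Z], rule linear_eqI)
  show "is_linear (\<lambda>Z. tmap (\<lambda>x. x) Delta (id_tensor_Bplus Z))"
    by (intro linear_comp'[OF tmap_linear] idB_linear)
  show "is_linear (\<lambda>Z. R0' Z + id3B (tmap (\<lambda>x. x) Delta (Z :: 'k::comm_ring_1 HH)))"
    by (intro linear_plus R0'_linear linear_comp'[OF id3B_linear tmap_linear])
  fix p :: "forest \<times> forest"
  obtain a b where p: "p = (a, b)" by (cases p)
  show "tmap (\<lambda>x. x) Delta (id_tensor_Bplus (bas p)) = R0' (bas p) + id3B (tmap (\<lambda>x. x) Delta (bas p :: 'k HH))"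
    by (simp add: p cop_tree_Node tens_add2 tens_idB del: cop_tree.simps)
qed

lemma R0_lemma: "Rc {#} (id_tensor_Bplus Z) = R0' (Z :: 'k::comm_ring_1 HH)"
  by (rule fun_cong[of _ _ Z], rule linear_eqI[OF linear_comp'[OF Rc_linear idB_linear] R0'_linear]) auto

definition LHS3 :: "'k::comm_ring_1 H \<Rightarrow> 'k H3" where "LHS3 x = ra (tmap Delta (\<lambda>x. x) (Delta x))"
definition RHS3 :: "'k::comm_ring_1 H \<Rightarrow> 'k H3" where "RHS3 x = tmap (\<lambda>x. x) Delta (Delta x)"

lemma LHS3_mult: "mult_map LHS3"
  unfolding LHS3_def[abs_def]
  by (intro mult_map_comp[OF ra_mult] mult_map_comp[OF tmap_mult_map] Delta_mult id_mult_map)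

lemma RHS3_mult: "mult_map RHS3"
  unfolding RHS3_def[abs_def]
  by (intro mult_map_comp[OF tmap_mult_map] Delta_mult id_mult_map)

lemma coassoc: "LHS3 = (RHS3 :: 'k::comm_ring_1 H \<Rightarrow> 'k H3)"
proof (rule mult_map_eq_trees[OF LHS3_mult RHS3_mult])
  fix T
  show "LHS3 (bas {#T#} :: 'k H) = RHS3 (bas {#T#})"
  proof (induction T)
    case (Node ts)
    have IH: "LHS3 (bas ts :: 'k H) = RHS3 (bas ts)"
      by (rule mult_map_eq_forest[OF LHS3_mult RHS3_mult]) (use Node in auto)
    define X :: "'k HH" where "X = Delta (bas ts)"
    have IH': "ra (tmap Delta (\<lambda>x. x) X) = tmap (\<lambda>x. x) Delta X"
      using IH by (simp add: LHS3_def RHS3_def X_def del: Delta_bas)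
    have DT: "Delta (bas {#Node ts#}) = bas ({#Node ts#}, {#}) + id_tensor_Bplus X"
      unfolding X_def by (rule Delta_tree)
    have "LHS3 (bas {#Node ts#} :: 'k H) = ra (tens (Delta (bas {#Node ts#})) 1) + ra (tmap Delta (\<lambda>x. x) (id_tensor_Bplus X))"
      by (simp add: LHS3_def DT linear_add[OF tmap_linear] linear_add[OF ra_linear] del: Delta_bas)
    also have "\<dots> = bas ({#Node ts#}, {#}, {#}) + R0' X + id3B (tmap (\<lambda>x. x) Delta X)"
      by (simp add: ra_tens1 DT linear_add[OF Rc_linear] R0_lemma idA_lemma IH' del: Delta_bas)
    also have "\<dots> = RHS3 (bas {#Node ts#})"
      by (simp add: RHS3_def DT linear_add[OF tmap_linear] idB_lemma tens_bas_one zero_prod_def add.assoc del: Delta_bas)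
    finally show ?case .
  qed
qed


lemma Delta_single: "Delta (Poly_Mapping.single a c) = Poly_Mapping.single 0 c * (cop_forest a :: 'k::comm_ring_1 HH)"
  using linear_single[OF Delta_linear, of a c] by simp

definition C3 :: "'k::comm_ring_1 dual \<Rightarrow> 'k H3 \<Rightarrow> 'k HH" where
  "C3 \<alpha> = linext (\<lambda>(a, (b, c)). Poly_Mapping.single (a, b) (\<alpha> c))"
lemma C3_linear: "is_linear (C3 \<alpha>)" unfolding C3_def by (rule is_linear_linext)
lemma C3_bas[simp]: "C3 \<alpha> (bas (a, (b, c))) = Poly_Mapping.single (a, b) (\<alpha> c)" by (simp add: C3_def)

lemma C3_Rc: "C3 \<alpha> (Rc c Y) = Poly_Mapping.single 0 (\<alpha> c) * Y"
  by (rule fun_cong[of _ _ Y], rule linear_eqI[OF linear_comp'[OF C3_linear Rc_linear] linear_mult_left[OF linear_id]])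
     (auto simp: mult_single)

lemma cocyc1: "Delta (id_tensor_dual \<alpha> z) = C3 \<alpha> (ra (tmap Delta (\<lambda>x. x) z))"
proof -
  have "(\<lambda>z. Delta (id_tensor_dual \<alpha> z)) = (\<lambda>z. C3 \<alpha> (ra (tmap Delta (\<lambda>x. x) z)))"
  proof (rule linear_eqI)
    show "is_linear (\<lambda>z. Delta (id_tensor_dual \<alpha> z))" by (rule linear_comp'[OF Delta_linear idA_linear])
    show "is_linear (\<lambda>z. C3 \<alpha> (ra (tmap Delta (\<lambda>x. x) z)))"
      by (rule linear_comp'[OF C3_linear linear_comp'[OF ra_linear tmap_linear]])
    fix p :: "forest \<times> forest"
    obtain a b where p: "p = (a, b)" by (cases p)
    have "Delta (id_tensor_dual \<alpha> (bas (a, b))) = Poly_Mapping.single 0 (\<alpha> b) * Delta (bas a)"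
      by (simp add: Delta_single)
    also have "\<dots> = C3 \<alpha> (ra (tmap Delta (\<lambda>x. x) (bas (a, b))))"
      by (simp add: ra_tens C3_Rc)
    finally show "Delta (id_tensor_dual \<alpha> (bas p)) = C3 \<alpha> (ra (tmap Delta (\<lambda>x. x) (bas p)))"
      by (simp only: p)
  qed
  then show ?thesis by metis
qed

lemma tens_idA: "tens (bas a) (id_tensor_dual \<alpha> Y) = C3 \<alpha> (tens (bas a) Y)"
  by (rule fun_cong[of _ _ Y], rule linear_eqI[OF linear_comp'[OF tens_linear2 idA_linear]
        linear_comp'[OF C3_linear tens_linear2]])
     (auto simp: tens_single)

lemma cocyc2: "tmap (\<lambda>x. x) (\<lambda>x. id_tensor_dual \<alpha> (Delta x)) z = C3 \<alpha> (tmap (\<lambda>x. x) Delta z)"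
  by (rule fun_cong[of _ _ z], rule linear_eqI[OF tmap_linear linear_comp'[OF C3_linear tmap_linear]])
     (auto simp: tens_idA simp del: Delta_bas)

lemma Delta_DL: "Delta (DL \<alpha> x) = tens (DL \<alpha> x) 1"
  by (simp add: DL_dapply Delta_single tens_single_one zero_prod_def cop_forest_def)

lemma tmap_DL: "tmap (\<lambda>x. x) (DL \<alpha>) z = tens (id_tensor_dual \<alpha> z) 1"
  by (rule fun_cong[of _ _ z], rule linear_eqI[OF tmap_linear linear_comp'[OF tens_linear1 idA_linear]])
     (auto simp: tens_single tens_single_one)

lemma delta_fun: "delta \<alpha> = (\<lambda>x. id_tensor_dual \<alpha> (Delta x) - DL \<alpha> x)"
  by (rule ext) (simp add: delta_alt)

lemma coassoc_pt: "ra (tmap Delta (\<lambda>x. x) (Delta x)) = tmap (\<lambda>x. x) Delta (Delta (x :: 'k::comm_ring_1 H))"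
  using coassoc unfolding LHS3_def[abs_def] RHS3_def[abs_def] by metis

lemma delta_cocycle: "Delta (delta \<alpha> x) = tens (delta \<alpha> x) 1 + tmap (\<lambda>x. x) (delta \<alpha>) (Delta x)"
proof -
  have l1: "is_linear (\<lambda>x. id_tensor_dual \<alpha> (Delta x))" by (rule linear_comp'[OF idA_linear Delta_linear])
  have "Delta (delta \<alpha> x) = tmap (\<lambda>x. x) (\<lambda>x. id_tensor_dual \<alpha> (Delta x)) (Delta x) - tens (DL \<alpha> x) 1"
    by (simp add: delta_alt linear_diff[OF Delta_linear] cocyc1 coassoc_pt cocyc2 Delta_DL)
  also have "\<dots> = tens (delta \<alpha> x) 1 + tmap (\<lambda>x. x) (delta \<alpha>) (Delta x)"
    unfolding delta_fun tmap_id_diff[OF l1 DL_linear] tmap_DL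
    by (simp add: tens_diff1)
  finally show ?thesis .
qed

lemma Bplus_cocycle: "Delta (Bplus y) = tens (Bplus y) 1 + tmap (\<lambda>x. x) Bplus (Delta y)"
  by (rule fun_cong[of _ _ y], rule linear_eqI[OF linear_comp'[OF Delta_linear Bplus_linear]
      linear_plus[OF linear_comp'[OF tens_linear1 Bplus_linear] linear_comp'[OF tmap_linear Delta_linear]]])
     (simp add: Delta_tree tens_bas_one idB_tmap zero_prod_def del: Delta_bas)

lemma Lop_cocycle: "Delta (Lop \<alpha> y) = tens (Lop \<alpha> y) 1 + tmap (\<lambda>x. x) (Lop \<alpha>) (Delta y)"
proof -
  have "Lop \<alpha> = (\<lambda>x. Bplus x + delta \<alpha> x)" by (rule ext) (simp add: Lop_def)
  then show ?thesis
    by (simp add: Lop_def linear_add[OF Delta_linear] Bplus_cocycle delta_cocycle tens_add1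
        tmap_id_add[OF Bplus_linear delta_linear])
qed

lemma theta_linear: "is_linear (theta \<alpha>)" unfolding theta_Lop by (rule phi_linear)
lemma theta_mult: "mult_map (theta \<alpha>)" unfolding theta_Lop by (rule phi_mult)
lemma theta_Bplus': "theta \<alpha> (Bplus x) = Lop \<alpha> (theta \<alpha> x)"
  unfolding theta_Lop by (rule phi_Bplus[OF Lop_linear])

lemma theta_hopf: "Delta (theta \<alpha> x) = tmap (theta \<alpha>) (theta \<alpha>) (Delta (x :: 'k::comm_ring_1 H))"
proof -
  have m1: "mult_map (\<lambda>x. Delta (theta \<alpha> x))" by (rule mult_map_comp[OF Delta_mult theta_mult])
  have m2: "mult_map (\<lambda>x. tmap (theta \<alpha>) (theta \<alpha>) (Delta x))"
    by (rule mult_map_comp[OF tmap_mult_map[OF theta_mult theta_mult] Delta_mult])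
  have "(\<lambda>x. Delta (theta \<alpha> x)) = (\<lambda>x. tmap (theta \<alpha>) (theta \<alpha>) (Delta x))"
  proof (rule mult_map_eq_trees[OF m1 m2])
    fix T show "Delta (theta \<alpha> (bas {#T#})) = tmap (theta \<alpha>) (theta \<alpha>) (Delta (bas {#T#} :: 'k H))"
    proof (induction T)
      case (Node ts)
      have IH: "Delta (theta \<alpha> (bas ts)) = tmap (theta \<alpha>) (theta \<alpha>) (Delta (bas ts :: 'k H))"
        using mult_map_eq_forest[OF m1 m2, of ts] Node by simp
      have e: "(\<lambda>x. theta \<alpha> (Bplus x)) = (\<lambda>x. Lop \<alpha> (theta \<alpha> x))" by (rule ext) (rule theta_Bplus')
      have "Delta (theta \<alpha> (bas {#Node ts#})) = Delta (Lop \<alpha> (theta \<alpha> (bas ts)))"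
        using theta_Bplus'[of \<alpha> "bas ts"] by simp
      also have "\<dots> = tens (theta \<alpha> (bas {#Node ts#})) 1 + tmap (theta \<alpha>) (\<lambda>x. Lop \<alpha> (theta \<alpha> x)) (Delta (bas ts))"
        unfolding Lop_cocycle IH
        by (simp add: tmap_comp[OF linear_id Lop_linear] flip: theta_Bplus')
      also have "\<dots> = tmap (theta \<alpha>) (theta \<alpha>) (Delta (bas {#Node ts#}))"
        by (simp add: Delta_tree linear_add[OF tmap_linear] idB_tmap tmap_comp[OF theta_linear theta_linear]
             mult_map_one[OF theta_mult] tens_bas_one zero_prod_def flip: e del: Delta_bas)
      finally show ?case .
    qed
  qed
  then show ?thesis by metis
qed


subsection \<open>Counit\<close>

definition P0 :: "'k::comm_ring_1 H \<Rightarrow> 'k H" where "P0 z = Poly_Mapping.single {#} (lk z {#})"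

lemma P0_linear: "is_linear P0"
  unfolding is_linear_def P0_def by (simp add: lookup_add single_add lookup_map_mult map_mult_single)

lemma lk_bas: "lk (bas a) b = (if a = b then 1 else 0)"
  by (simp add: lookup_single)

lemma P0_mult: "mult_map P0"
proof (rule mult_mapI[OF P0_linear])
  show "P0 (bas 0) = 1" by (simp add: P0_def)
  show "P0 (bas (a + b)) = P0 (bas a) * P0 (bas b)" for a b :: forest
    by (auto simp: P0_def lk_bas mult_single)
qed

lemma P0_DL: "P0 (DL \<alpha> x) = DL \<alpha> x"
  by (simp add: P0_def DL_dapply)

lemma P0_Bplus: "P0 (Bplus x) = 0"
proof -
  have "(\<lambda>x. P0 (Bplus x)) = (\<lambda>x::'a::comm_ring_1 H. 0)"
    by (rule linear_eqI[OF linear_comp'[OF P0_linear Bplus_linear] linear_const0]) (simp add: P0_def lk_bas)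
  then show ?thesis by metis
qed

definition Em :: "'k::comm_ring_1 HH \<Rightarrow> 'k H" where
  "Em = linext (\<lambda>p. if fst p = {#} then bas (snd p) else 0)"
lemma Em_linear: "is_linear Em" unfolding Em_def by (rule is_linear_linext)
lemma Em_bas[simp]: "Em (bas p) = (if fst p = {#} then bas (snd p) else 0)" by (simp add: Em_def)

lemma Em_mult: "mult_map Em"
proof (rule mult_mapI[OF Em_linear])
  show "Em (bas 0) = 1" by (simp add: zero_prod_def)
  show "Em (bas (a + b)) = Em (bas a) * Em (bas b)" for a b :: "forest \<times> forest"
    by (auto simp: mult_single)
qed

lemma Em_idB: "Em (id_tensor_Bplus Z) = Bplus (Em Z)"
proof -
  have "(\<lambda>Z. Em (id_tensor_Bplus Z)) = (\<lambda>Z::'a::comm_ring_1 HH. Bplus (Em Z))"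
  proof (rule linear_eqI[OF linear_comp'[OF Em_linear idB_linear] linear_comp'[OF Bplus_linear Em_linear]])
    fix p :: "forest \<times> forest"
    show "Em (id_tensor_Bplus (bas p)) = Bplus (Em (bas p :: 'a HH))"
      by (cases p) (simp add: linear_0[OF Bplus_linear])
  qed
  then show ?thesis by metis
qed

lemma Em_Delta: "Em (Delta x) = (x :: 'k::comm_ring_1 H)"
proof -
  have m: "mult_map (\<lambda>x::'k H. Em (Delta x))" by (rule mult_map_comp[OF Em_mult Delta_mult])
  have "(\<lambda>x::'k H. Em (Delta x)) = (\<lambda>x. x)"
  proof (rule mult_map_eq_trees[OF m id_mult_map])
    fix T show "Em (Delta (bas {#T#} :: 'k H)) = bas {#T#}"
    proof (induction T)
      case (Node ts)
      have IH: "Em (Delta (bas ts :: 'k H)) = bas ts"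
        using mult_map_eq_forest[OF m id_mult_map, of ts] Node by simp
      show ?case by (simp add: Delta_tree linear_add[OF Em_linear] Em_idB IH del: Delta_bas)
    qed
  qed
  then show ?thesis by metis
qed

lemma P0_idA: "P0 (id_tensor_dual \<alpha> z) = DL \<alpha> (Em z)"
proof -
  have "(\<lambda>z. P0 (id_tensor_dual \<alpha> z)) = (\<lambda>z. DL \<alpha> (Em z))"
  proof (rule linear_eqI[OF linear_comp'[OF P0_linear idA_linear] linear_comp'[OF DL_linear Em_linear]])
    fix p :: "forest \<times> forest"
    show "P0 (id_tensor_dual \<alpha> (bas p)) = DL \<alpha> (Em (bas p))"
      by (cases p) (auto simp: P0_def lookup_single linear_0[OF DL_linear])
  qed
  then show ?thesis by metis
qed

lemma P0_delta: "P0 (delta \<alpha> y) = 0"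
  by (simp add: delta_alt linear_diff[OF P0_linear] P0_idA Em_Delta P0_DL)

lemma P0_theta: "P0 (theta \<alpha> x) = P0 (x :: 'k::comm_ring_1 H)"
proof -
  have m: "mult_map (\<lambda>x::'k H. P0 (theta \<alpha> x))" by (rule mult_map_comp[OF P0_mult theta_mult])
  have "(\<lambda>x::'k H. P0 (theta \<alpha> x)) = P0"
  proof (rule mult_map_eq_trees[OF m P0_mult])
    fix T :: rtree
    obtain ts where T: "T = Node ts" by (cases T)
    have "P0 (theta \<alpha> (bas {#T#} :: 'k H)) = P0 (Lop \<alpha> (theta \<alpha> (bas ts)))"
      using theta_Bplus'[of \<alpha> "bas ts"] by (simp add: T)
    also have "\<dots> = 0" by (simp add: Lop_def linear_add[OF P0_linear] P0_Bplus P0_delta)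
    also have "\<dots> = P0 (bas {#T#})" by (simp add: P0_def T lk_bas)
    finally show "P0 (theta \<alpha> (bas {#T#} :: 'k H)) = P0 (bas {#T#})" .
  qed
  then show ?thesis by metis
qed

lemma counit_theta: "counit (theta \<alpha> x) = counit x"
  using arg_cong[OF P0_theta[of \<alpha> x], of "\<lambda>z. lk z {#}"] by (simp add: counit_def P0_def)


lemma DL_dcomp: "is_linear f \<Longrightarrow> DL (dcomp \<beta> f) x = DL \<beta> (f x)"
proof -
  assume f: "is_linear f"
  have "DL (dcomp \<beta> f) = (\<lambda>x. DL \<beta> (f x))"
    by (rule linear_eqI[OF DL_linear linear_comp'[OF DL_linear f]]) (simp add: dcomp_def fr_bas DL_dapply)
  then show ?thesis by metis
qed

lemma dapply_dcomp: "is_linear f \<Longrightarrow> dapply (dcomp \<beta> f) x = dapply \<beta> (f x)"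
  by (simp add: dapply_DL DL_dcomp)

lemma dcomp_dcomp: "is_linear g \<Longrightarrow> dcomp (dcomp \<beta> g) f = dcomp \<beta> (\<lambda>x. g (f x))"
  using dapply_dcomp[of g \<beta>] by (intro ext) (simp add: dcomp_def)

lemma dcomp_id: "dcomp \<beta> (\<lambda>x. x) = \<beta>"
  by (rule ext) (simp add: dcomp_def fr_bas)

lemma single0_mult2: "Poly_Mapping.single 0 c * (Poly_Mapping.single 0 d * X) = Poly_Mapping.single 0 (c * d) * (X :: 'a::monoid_add \<Rightarrow>\<^sub>0 'k::comm_ring_1)"
  by (simp add: mult.assoc[symmetric] mult_single)

lemma idA_tens: fixes \<beta> :: "'k::comm_ring_1 dual" shows "id_tensor_dual \<beta> (tens X Y) = Poly_Mapping.single 0 (dapply \<beta> Y) * X"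
proof (rule bilinear_eqI[where F="\<lambda>X Y. id_tensor_dual \<beta> (tens X Y)" and G="\<lambda>X Y. Poly_Mapping.single 0 (dapply \<beta> Y) * X"])
  show "is_linear (\<lambda>X. id_tensor_dual \<beta> (tens X Y))" for Y by (rule linear_comp'[OF idA_linear tens_linear1])
  show "is_linear (\<lambda>Y. id_tensor_dual \<beta> (tens X Y))" for X by (rule linear_comp'[OF idA_linear tens_linear2])
  show "is_linear (\<lambda>X::'k H. Poly_Mapping.single 0 (dapply \<beta> Y) * X)" for Y
    by (simp add: linear_ring_iff distrib_left mult.left_commute)
  show "is_linear (\<lambda>Y. Poly_Mapping.single 0 (dapply \<beta> Y) * X)" for X
    by (simp add: linear_ring_iff dapply_add dapply_smul single_add distrib_right single0_mult2)
  show "id_tensor_dual \<beta> (tens (bas a) (bas b)) = Poly_Mapping.single 0 (dapply \<beta> (bas b)) * bas a" for a b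
    by (simp add: mult_single)
qed

lemma theta_idA: "theta \<alpha> (id_tensor_dual (dcomp \<beta> (theta \<alpha>)) z) = id_tensor_dual \<beta> (tmap (theta \<alpha>) (theta \<alpha>) z)"
proof -
  have "(\<lambda>z. theta \<alpha> (id_tensor_dual (dcomp \<beta> (theta \<alpha>)) z)) = (\<lambda>z. id_tensor_dual \<beta> (tmap (theta \<alpha>) (theta \<alpha>) z))"
  proof (rule linear_eqI[OF linear_comp'[OF theta_linear idA_linear] linear_comp'[OF idA_linear tmap_linear]])
    fix p :: "forest \<times> forest"
    obtain a b where p: "p = (a, b)" by (cases p)
    show "theta \<alpha> (id_tensor_dual (dcomp \<beta> (theta \<alpha>)) (bas p)) = id_tensor_dual \<beta> (tmap (theta \<alpha>) (theta \<alpha>) (bas p))"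
    proof -
      have e: "theta \<alpha> (Poly_Mapping.single a (dcomp \<beta> (theta \<alpha>) b)) = Poly_Mapping.single 0 (dcomp \<beta> (theta \<alpha>) b) * theta \<alpha> (bas a)"
        by (rule linear_single[OF theta_linear])
      show ?thesis
        by (simp only: p idA_bas e tmap_bas idA_tens) (simp add: dcomp_def fr_bas)
    qed
  qed
  then show ?thesis by metis
qed

lemma theta_DL: "theta \<alpha> (DL \<gamma> x) = DL \<gamma> x"
proof -
  have "theta \<alpha> (DL \<gamma> x) = Poly_Mapping.single 0 (dapply \<gamma> x) * theta \<alpha> 1"
    using linear_single[OF theta_linear, where a="{#}" and c="dapply \<gamma> x"] by (simp add: DL_dapply)
  then show ?thesis by (simp add: mult_map_one[OF theta_mult] DL_dapply)
qed

lemma theta_delta: "theta \<alpha> (delta (dcomp \<beta> (theta \<alpha>)) x) = delta \<beta> (theta \<alpha> x)"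
  by (simp add: delta_alt linear_diff[OF theta_linear] theta_idA theta_DL DL_dcomp[OF theta_linear]
      flip: theta_hopf)

lemma idA_plus: "id_tensor_dual (\<lambda>w. \<alpha> w + \<beta> w) z = id_tensor_dual \<alpha> z + id_tensor_dual \<beta> z"
proof -
  have "id_tensor_dual (\<lambda>w. \<alpha> w + \<beta> w) = (\<lambda>z. id_tensor_dual \<alpha> z + id_tensor_dual \<beta> z)"
    by (rule linear_eqI[OF idA_linear linear_plus[OF idA_linear idA_linear]]) (auto simp: single_add)
  then show ?thesis by metis
qed

lemma DL_plus: "DL (\<lambda>w. \<alpha> w + \<beta> w) z = DL \<alpha> z + DL \<beta> z"
proof -
  have "DL (\<lambda>w. \<alpha> w + \<beta> w) = (\<lambda>z. DL \<alpha> z + DL \<beta> z)"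
    by (rule linear_eqI[OF DL_linear linear_plus[OF DL_linear DL_linear]]) (auto simp: single_add)
  then show ?thesis by metis
qed

lemma delta_plus: "delta (\<lambda>w. \<alpha> w + \<beta> w) x = delta \<alpha> x + delta \<beta> x"
  by (simp add: delta_alt idA_plus DL_plus)

lemma theta_comp: "theta \<alpha> (theta (dcomp \<beta> (theta \<alpha>)) x) = theta (\<lambda>w. \<alpha> w + \<beta> w) (x :: 'k::comm_ring_1 H)"
proof -
  let ?g = "dcomp \<beta> (theta \<alpha>)"
  have "(\<lambda>x. theta \<alpha> (theta ?g x)) = phi (Lop (\<lambda>w. \<alpha> w + \<beta> w))"
  proof (rule phi_unique)
    show "mult_map (\<lambda>x. theta \<alpha> (theta ?g x))" by (rule mult_map_comp[OF theta_mult theta_mult])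
    fix x :: "'k H"
    show "theta \<alpha> (theta ?g (Bplus x)) = Lop (\<lambda>w. \<alpha> w + \<beta> w) (theta \<alpha> (theta ?g x))"
      by (simp add: theta_Bplus' Lop_def linear_add[OF theta_linear] theta_delta delta_plus add.assoc)
  qed
  then show ?thesis unfolding theta_Lop by metis
qed

lemma idA_zero: "id_tensor_dual (\<lambda>w. 0) z = (0 :: 'k::comm_ring_1 H)"
proof -
  have e: "id_tensor_dual (\<lambda>w. 0 :: 'k) = (\<lambda>z. 0)"
    by (rule linear_eqI[OF idA_linear linear_const0]) auto
  show ?thesis using fun_cong[OF e, of z] by simp
qed

lemma DL_zero: "DL (\<lambda>w. 0) z = (0 :: 'k::comm_ring_1 H)"
  by (simp add: DL_dapply dapply_def)

lemma delta_zero: "delta (\<lambda>w. 0) x = (0 :: 'k::comm_ring_1 H)"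
  by (simp add: delta_alt idA_zero DL_zero)

lemma theta_zero: "theta (\<lambda>w. 0) = (\<lambda>x::'k::comm_ring_1 H. x)"
proof -
  have "Lop (\<lambda>w. 0) = (Bplus :: 'k H \<Rightarrow> 'k H)" by (rule ext) (simp add: Lop_def delta_zero)
  then show ?thesis by (simp add: theta_Lop phi_Bplus_id)
qed

definition ninv :: "'k::comm_ring_1 dual \<Rightarrow> 'k dual" where "ninv \<alpha> = (\<lambda>w. - dcomp \<alpha> (theta \<alpha>) w)"

lemma dcomp_neg: "dcomp (\<lambda>w. - \<alpha> w) f = (\<lambda>w. - dcomp \<alpha> f w)"
  by (rule ext) (simp add: dcomp_def dapply_def sum_negf)

lemma theta_right_inv: "theta \<alpha> (theta (ninv \<alpha>) x) = (x :: 'k::comm_ring_1 H)"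
  using theta_comp[of \<alpha> "\<lambda>w. - \<alpha> w" x] by (simp add: ninv_def dcomp_neg theta_zero)

lemma theta_left_inv: "theta (ninv \<alpha>) (theta \<alpha> x) = (x :: 'k::comm_ring_1 H)"
proof -
  have "theta \<alpha> y = theta (ninv (ninv \<alpha>)) y" for y :: "'k H"
    using arg_cong[OF theta_right_inv[of "ninv \<alpha>" y], of "theta \<alpha>"] theta_right_inv[of \<alpha>] by simp
  then have "theta \<alpha> = theta (ninv (ninv \<alpha>))" by (rule ext)
  then show ?thesis using theta_right_inv[of "ninv \<alpha>" x] by simp
qed

lemma theta_bij: "bij (theta \<alpha> :: 'k::comm_ring_1 H \<Rightarrow> 'k H)"
  by (rule o_bij[of "theta (ninv \<alpha>)"]) (auto simp: theta_left_inv theta_right_inv)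

lemma theta_inv: "inv_into UNIV (theta \<alpha>) = theta (ninv \<alpha> :: 'k::comm_ring_1 dual)"
proof (rule ext)
  fix y :: "'k H"
  show "inv_into UNIV (theta \<alpha>) y = theta (ninv \<alpha>) y"
    by (metis UNIV_I bij_betw_imp_inj_on inv_into_f_f theta_bij theta_right_inv)
qed

lemma theta_comp_gen: "theta \<alpha> \<circ> theta \<beta> = theta (\<lambda>w. \<alpha> w + dcomp \<beta> (inv_into UNIV (theta \<alpha>)) w :: 'k::comm_ring_1)"
proof (rule ext)
  fix x :: "'k H"
  let ?b' = "dcomp \<beta> (theta (ninv \<alpha>))"
  have "dcomp ?b' (theta \<alpha>) = \<beta>"
    by (simp add: dcomp_dcomp[OF theta_linear] theta_left_inv dcomp_id)
  then show "(theta \<alpha> \<circ> theta \<beta>) x = theta (\<lambda>w. \<alpha> w + dcomp \<beta> (inv_into UNIV (theta \<alpha>)) w) x"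
    using theta_comp[of \<alpha> ?b' x] by (simp add: theta_inv)
qed


lemma mult_bas_linext: "bas a * y = linext (\<lambda>p. bas (a + p)) (y :: 'k::comm_ring_1 H)"
proof -
  have "(\<lambda>y::'k H. bas a * y) = linext (\<lambda>p. bas (a + p))"
    by (rule linear_eqI[OF _ is_linear_linext]) (auto simp: linear_ring_iff distrib_left mult.left_commute mult_single)
  then show ?thesis by metis
qed

lemma lk_shift: "lk (bas a * y) (a + k) = lk (y :: 'k::comm_ring_1 H) k"
proof -
  have "lk (bas a * y) (a + k) = (\<Sum>p\<in>ks y. if p = k then lk y p else 0)"
    unfolding mult_bas_linext linext_def
    by (simp add: lookup_sum lookup_map_mult lookup_single when_def)
  also have "\<dots> = lk y k" by (simp add: in_keys_iff)
  finally show ?thesis .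
qed

lemma keys_idA: "ks (id_tensor_dual \<alpha> z) \<subseteq> fst ` ks z"
proof -
  have "ks (id_tensor_dual \<alpha> z) \<subseteq> (\<Union>p\<in>ks z. ks ((\<lambda>(a, b). Poly_Mapping.single a (\<alpha> b)) p))"
    unfolding id_tensor_dual_def by (rule keys_linext)
  also have "\<dots> \<subseteq> fst ` ks z" by (force split: prod.splits if_splits)
  finally show ?thesis .
qed

lemma keys_idB: "ks (id_tensor_Bplus (Z :: 'k::comm_ring_1 HH)) \<subseteq> (\<lambda>p. (fst p, {#Node (snd p)#})) ` ks Z"
proof -
  have "ks (id_tensor_Bplus Z) \<subseteq> (\<Union>p\<in>ks Z. ks ((\<lambda>(a, b). bas (a, {#Node b#}) :: 'k HH) p))"
    unfolding id_tensor_Bplus_def by (rule keys_linext)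
  also have "\<dots> \<subseteq> (\<lambda>p. (fst p, {#Node (snd p)#})) ` ks Z" by (force split: prod.splits)
  finally show ?thesis .
qed

lemma idA_shift: "id_tensor_dual \<alpha> (bas (a, {#}) * Z) = bas a * id_tensor_dual \<alpha> Z"
proof -
  have "(\<lambda>Z. id_tensor_dual \<alpha> (bas (a, {#}) * Z)) = (\<lambda>Z. bas a * id_tensor_dual \<alpha> Z)"
  proof (rule linear_eqI)
    show "is_linear (\<lambda>Z. id_tensor_dual \<alpha> (bas (a, {#}) * Z))"
      by (rule linear_comp'[OF idA_linear]) (simp add: linear_ring_iff distrib_left mult.left_commute)
    show "is_linear (\<lambda>Z. bas a * id_tensor_dual \<alpha> Z)"
      by (rule linear_mult_left[OF idA_linear])
    fix p :: "forest \<times> forest"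
    show "id_tensor_dual \<alpha> (bas (a, {#}) * bas p) = bas a * id_tensor_dual \<alpha> (bas p)"
      by (cases p) (simp add: mult_single)
  qed
  then show ?thesis by metis
qed

lemma mem_fsize: "t \<in># a \<Longrightarrow> tsize t \<le> fsize a"
  by (metis fsize_add_mset le_add1 multi_member_split)

lemma delta_probe: "lk (delta \<alpha> (bas (add_mset (Node w) w))) {#Node w#} = (\<alpha> w :: 'k::comm_ring_1)"
proof -
  define Z :: "'k HH" where "Z = cop_forest w"
  have D: "Delta (bas (add_mset (Node w) w) :: 'k H) = bas ({#Node w#}, {#}) * Z + id_tensor_Bplus Z * Z"
  proof -
    have "cop_forest (add_mset (Node w) w) = cop_tree (Node w) * (cop_forest w :: 'k HH)"
      by (simp add: cop_forest_def del: cop_tree.simps)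
    then show ?thesis by (simp add: Z_def cop_tree_Node distrib_right del: cop_tree.simps)
  qed
  have i: "lk (bas {#Node w#} * id_tensor_dual \<alpha> Z) {#Node w#} = \<alpha> w"
  proof -
    have "lk (bas {#Node w#} * id_tensor_dual \<alpha> Z) ({#Node w#} + {#}) = lk (id_tensor_dual \<alpha> Z) {#}"
      by (rule lk_shift)
    also have "\<dots> = lk (P0 (id_tensor_dual \<alpha> Z)) {#}" by (simp add: P0_def)
    also have "\<dots> = \<alpha> w" using Em_Delta[of "bas w :: 'k H"] by (simp add: P0_idA Z_def DL_dapply)
    finally show ?thesis by simp
  qed
  have ii: "lk (id_tensor_dual \<alpha> (id_tensor_Bplus Z * Z)) {#Node w#} = 0"
  proof (rule ccontr)
    assume "lk (id_tensor_dual \<alpha> (id_tensor_Bplus Z * Z)) {#Node w#} \<noteq> 0"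
    then have "{#Node w#} \<in> ks (id_tensor_dual \<alpha> (id_tensor_Bplus Z * Z))" by (simp add: in_keys_iff)
    then obtain r where r: "r \<in> ks (id_tensor_Bplus Z * Z)" "fst r = {#Node w#}" using keys_idA[of \<alpha> "id_tensor_Bplus Z * Z"] by force
    then obtain p q where pq: "p \<in> ks (id_tensor_Bplus Z)" "q \<in> ks Z" "r = p + q" using keys_mult[of "id_tensor_Bplus Z" Z] by blast
    obtain p' where p': "p' \<in> ks Z" "fst p = fst p'" using pq(1) keys_idB[of Z] by force
    have g: "\<And>x. x \<in> ks Z \<Longrightarrow> fsize (fst x) \<le> fsize w"
      using grad_cop_forest[of w] unfolding grad_def Z_def by fastforce
    have "Node w \<in># fst p + fst q" using r pq by simp
    then have "tsize (Node w) \<le> fsize w"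
      using mem_fsize g p' pq(2) by (metis le_trans union_iff)
    then show False by simp
  qed
  have "lk (delta \<alpha> (bas (add_mset (Node w) w))) {#Node w#}
      = lk (bas {#Node w#} * id_tensor_dual \<alpha> Z) {#Node w#} + lk (id_tensor_dual \<alpha> (id_tensor_Bplus Z * Z)) {#Node w#}
        - lk (DL \<alpha> (bas (add_mset (Node w) w))) {#Node w#}"
    by (simp add: delta_alt D linear_add[OF idA_linear] idA_shift lookup_add lookup_minus del: Delta_bas DL_bas)
  also have "\<dots> = \<alpha> w" using i ii by (simp add: DL_dapply lookup_single)
  finally show ?thesis .
qed

lemma delta_inj: "inj (delta :: 'k::comm_ring_1 dual \<Rightarrow> 'k H \<Rightarrow> 'k H)"
proof (rule injI)
  fix \<alpha> \<beta> :: "'k dual"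
  assume "delta \<alpha> = delta \<beta>"
  then show "\<alpha> = \<beta>" using delta_probe[of \<alpha>] delta_probe[of \<beta>] by (metis ext)
qed

lemma theta_inj: "inj (theta :: 'k::comm_ring_1 dual \<Rightarrow> 'k H \<Rightarrow> 'k H)"
proof (rule injI)
  fix \<alpha> \<beta> :: "'k dual"
  assume e: "theta \<alpha> = theta \<beta>"
  have "delta \<alpha> (theta \<alpha> x) = delta \<beta> (theta \<alpha> x)" for x
    using theta_Bplus[of \<alpha> x] theta_Bplus[of \<beta> x] e by simp
  then have "delta \<alpha> y = delta \<beta> y" for y
    using theta_right_inv[of \<alpha> y] by metis
  then have "delta \<alpha> = delta \<beta>" by (rule ext)
  then show "\<alpha> = \<beta>" using delta_inj by (metis injD)
qed


lemma theta_hopf_aut: "hopf_aut (theta \<alpha> :: 'k::comm_ring_1 H \<Rightarrow> 'k H)"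
  unfolding hopf_aut_def hopf_endo_def tensor_map_tmap
  using theta_linear[of \<alpha>] mult_map_one[OF theta_mult[of \<alpha>]] mult_map_mult[OF theta_mult[of \<alpha>]]
    theta_hopf[of \<alpha>] counit_theta[of \<alpha>] theta_bij[of \<alpha>] by blast

lemma hopf_aut_comp:
  assumes f: "hopf_aut f" and g: "hopf_aut g" shows "hopf_aut (f \<circ> g)"
proof -
  have lf: "is_linear f" and lg: "is_linear g" using f g by (auto simp: hopf_aut_def hopf_endo_def)
  show ?thesis
    using f g unfolding hopf_aut_def hopf_endo_def tensor_map_tmap
    by (auto simp: linear_comp' tmap_comp[OF lf lf] bij_comp[of g f, unfolded o_def] o_def)
qed

lemma hopf_aut_id: "hopf_aut (id :: 'k::comm_ring_1 H \<Rightarrow> 'k H)"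
  unfolding hopf_aut_def hopf_endo_def tensor_map_tmap id_def
  by (simp add: linear_id tmap_id bij_id[unfolded id_def])

lemma hopf_aut_inv:
  assumes f: "hopf_aut (f :: 'k::comm_ring_1 H \<Rightarrow> 'k H)"
  shows "hopf_aut (inv_into UNIV f)" and "inv_into UNIV f \<circ> f = id"
proof -
  let ?g = "inv_into UNIV f"
  have b: "bij f" and lf: "is_linear f" and one: "f 1 = 1" and m: "\<And>x y. f (x * y) = f x * f y"
    and D: "\<And>x. Delta (f x) = tmap f f (Delta x)" and c: "\<And>x. counit (f x) = counit x"
    using f by (auto simp: hopf_aut_def hopf_endo_def tensor_map_tmap)
  have fg: "f (?g x) = x" for x using b by (simp add: bij_is_surj surj_f_inv_f)
  have gf: "?g (f x) = x" for x using b by (simp add: bij_is_inj inv_f_f)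
  have lg: "is_linear ?g"
    unfolding is_linear_def
  proof (intro conjI allI)
    fix x y show "?g (x + y) = ?g x + ?g y"
      by (metis fg gf linear_add[OF lf])
  next
    fix c x show "?g (Poly_Mapping.map ((*) c) x) = Poly_Mapping.map ((*) c) (?g x)"
      by (metis fg gf linear_smul[OF lf])
  qed
  have "Delta (?g x) = tmap ?g ?g (Delta x)" for x
  proof -
    have "tmap ?g ?g (Delta x) = tmap ?g ?g (tmap f f (Delta (?g x)))" by (simp add: fg flip: D)
    also have "\<dots> = tmap (\<lambda>x. x) (\<lambda>x. x) (Delta (?g x))" by (simp add: tmap_comp[OF lg lg] gf)
    finally show ?thesis by (simp add: tmap_id)
  qed
  moreover have "?g 1 = 1" by (metis gf one)
  moreover have "?g (x * y) = ?g x * ?g y" for x y by (metis fg gf m)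
  moreover have "counit (?g x) = counit x" for x by (metis c fg)
  moreover have "bij ?g" by (rule bij_imp_bij_inv[OF b])
  ultimately show "hopf_aut ?g"
    unfolding hopf_aut_def hopf_endo_def tensor_map_tmap using lg by blast
  show "?g \<circ> f = id" by (rule ext) (simp add: gf)
qed

lemma AutHopf_group: "group (AutHopf :: ('k::comm_ring_1 H \<Rightarrow> 'k H) monoid)"
proof (rule groupI)
  fix x y z :: "'k H \<Rightarrow> 'k H"
  show "x \<in> carrier AutHopf \<Longrightarrow> y \<in> carrier AutHopf \<Longrightarrow> x \<otimes>\<^bsub>AutHopf\<^esub> y \<in> carrier AutHopf"
    by (simp add: AutHopf_def hopf_aut_comp)
  show "\<one>\<^bsub>AutHopf\<^esub> \<in> carrier (AutHopf :: ('k H \<Rightarrow> 'k H) monoid)"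
    by (simp add: AutHopf_def hopf_aut_id)
  show "x \<otimes>\<^bsub>AutHopf\<^esub> y \<otimes>\<^bsub>AutHopf\<^esub> z = x \<otimes>\<^bsub>AutHopf\<^esub> (y \<otimes>\<^bsub>AutHopf\<^esub> z)"
    by (simp add: AutHopf_def o_assoc)
  show "\<one>\<^bsub>AutHopf\<^esub> \<otimes>\<^bsub>AutHopf\<^esub> x = x" by (simp add: AutHopf_def)
  show "x \<in> carrier AutHopf \<Longrightarrow> \<exists>y\<in>carrier AutHopf. y \<otimes>\<^bsub>AutHopf\<^esub> x = \<one>\<^bsub>AutHopf\<^esub>"
    using hopf_aut_inv[of x] by (auto simp: AutHopf_def)
qed

lemma AutHopf_inv_theta: "inv\<^bsub>AutHopf\<^esub> (theta \<alpha>) = theta (ninv \<alpha> :: 'k::comm_ring_1 dual)"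
proof (rule group.inv_equality[OF AutHopf_group])
  show "theta (ninv \<alpha>) \<otimes>\<^bsub>AutHopf\<^esub> theta \<alpha> = \<one>\<^bsub>AutHopf\<^esub>"
    by (simp add: AutHopf_def o_def theta_left_inv id_def)
  show "theta \<alpha> \<in> carrier AutHopf" by (simp add: AutHopf_def theta_hopf_aut)
  show "theta (ninv \<alpha>) \<in> carrier AutHopf" by (simp add: AutHopf_def theta_hopf_aut)
qed

lemma theta_bullet: "theta (bullet \<alpha> \<beta>) = theta \<alpha> \<circ> theta (\<beta> :: 'k::comm_ring_1 dual)"
  by (simp add: bullet_def theta_comp_gen)

lemma dual_group: "group (dual_group :: 'k::comm_ring_1 dual monoid)"
proof (rule groupI)
  fix x y z :: "'k dual"
  show "x \<in> carrier dual_group \<Longrightarrow> y \<in> carrier dual_group \<Longrightarrow> x \<otimes>\<^bsub>dual_group\<^esub> y \<in> carrier dual_group"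
    by (simp add: dual_group_def)
  show "\<one>\<^bsub>dual_group\<^esub> \<in> carrier (dual_group :: 'k dual monoid)" by (simp add: dual_group_def)
  show "x \<otimes>\<^bsub>dual_group\<^esub> y \<otimes>\<^bsub>dual_group\<^esub> z = x \<otimes>\<^bsub>dual_group\<^esub> (y \<otimes>\<^bsub>dual_group\<^esub> z)"
    unfolding dual_group_def by simp (rule injD[OF theta_inj], simp add: theta_bullet o_assoc)
  show "\<one>\<^bsub>dual_group\<^esub> \<otimes>\<^bsub>dual_group\<^esub> x = x"
    unfolding dual_group_def by simp (rule injD[OF theta_inj], simp add: theta_bullet theta_zero o_def)
  show "x \<in> carrier dual_group \<Longrightarrow> \<exists>y\<in>carrier dual_group. y \<otimes>\<^bsub>dual_group\<^esub> x = \<one>\<^bsub>dual_group\<^esub>"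
  proof
    show "ninv x \<in> carrier dual_group" by (simp add: dual_group_def)
    have "theta (bullet (ninv x) x) = theta (\<lambda>_. 0 :: 'k)"
      by (simp add: theta_bullet theta_zero o_def theta_left_inv)
    then show "ninv x \<otimes>\<^bsub>dual_group\<^esub> x = \<one>\<^bsub>dual_group\<^esub>"
      using injD[OF theta_inj] by (simp add: dual_group_def)
  qed
qed

lemma dual_inv: "inv\<^bsub>dual_group\<^esub> \<alpha> = ninv (\<alpha> :: 'k::comm_ring_1 dual)"
proof (rule group.inv_equality[OF dual_group])
  have "theta (bullet (ninv \<alpha>) \<alpha>) = theta (\<lambda>_. 0 :: 'k)"
    by (simp add: theta_bullet theta_zero o_def theta_left_inv)
  then show "ninv \<alpha> \<otimes>\<^bsub>dual_group\<^esub> \<alpha> = \<one>\<^bsub>dual_group\<^esub>"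
    using injD[OF theta_inj] by (simp add: dual_group_def)
qed (simp_all add: dual_group_def)

lemma theta_subgroup: "subgroup (range theta) (AutHopf :: ('k::comm_ring_1 H \<Rightarrow> 'k H) monoid)"
proof (rule group.subgroupI[OF AutHopf_group])
  show "range theta \<subseteq> carrier (AutHopf :: ('k H \<Rightarrow> 'k H) monoid)"
    by (auto simp: AutHopf_def theta_hopf_aut)
  show "range theta \<noteq> {}" by simp
  fix a b assume "a \<in> range (theta :: 'k dual \<Rightarrow> _)" "b \<in> range (theta :: 'k dual \<Rightarrow> _)"
  then obtain \<alpha> \<beta> where ab: "a = theta \<alpha>" "b = theta \<beta>" by blast
  show "inv\<^bsub>AutHopf\<^esub> a \<in> range theta" by (simp add: ab AutHopf_inv_theta)
  show "a \<otimes>\<^bsub>AutHopf\<^esub> b \<in> range theta" by (simp add: ab AutHopf_def theta_comp_gen)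
qed

lemma theta_iso: "theta \<in> iso (dual_group :: 'k::comm_ring_1 dual monoid) ((AutHopf :: ('k H \<Rightarrow> 'k H) monoid)\<lparr>carrier := range theta\<rparr>)"
  unfolding iso_def hom_def
  by (auto simp: dual_group_def AutHopf_def theta_bullet bij_betw_def theta_inj)


theorem mainTheorem15:
  fixes \<alpha> :: "'k::field_char_0 dual"
  shows
    \<comment> \<open>(1)\<close>
    "(\<forall>w. \<forall>v\<in>Poly_Mapping.keys (theta \<alpha> (fr w) - fr w). fsize v < fsize w)
     \<comment> \<open>(2)\<close>
     \<and> hopf_aut (theta \<alpha>)
     \<and> inv_into UNIV (theta \<alpha>) = theta (\<lambda>w. - dcomp \<alpha> (theta \<alpha>) w)
     \<and> (\<forall>\<beta>::'k dual. theta \<alpha> \<circ> theta \<beta> = theta (\<lambda>w. \<alpha> w + dcomp \<beta> (inv_into UNIV (theta \<alpha>)) w))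
     \<comment> \<open>(3)\<close>
     \<and> inj (delta :: 'k dual \<Rightarrow> 'k H \<Rightarrow> 'k H)
     \<and> inj (theta :: 'k dual \<Rightarrow> 'k H \<Rightarrow> 'k H)
     \<and> group (dual_group :: 'k dual monoid)
     \<and> inv\<^bsub>(dual_group :: 'k dual monoid)\<^esub> \<alpha> = (\<lambda>w. - dcomp \<alpha> (theta \<alpha>) w)
     \<and> group (AutHopf :: ('k H \<Rightarrow> 'k H) monoid)
     \<and> subgroup (range theta) (AutHopf :: ('k H \<Rightarrow> 'k H) monoid)
     \<and> theta \<in> iso (dual_group :: 'k dual monoid) ((AutHopf :: ('k H \<Rightarrow> 'k H) monoid)\<lparr>carrier := range theta\<rparr>)"
  using theta_tri[of \<alpha>] theta_hopf_aut[of \<alpha>] theta_inv[of \<alpha>] theta_comp_gen[of \<alpha>]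
    delta_inj theta_inj dual_group dual_inv[of \<alpha>] AutHopf_group theta_subgroup theta_iso
  unfolding ninv_def by blast

end
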